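(* Let $\beta>0$ and $s>2$, and let $G=G_{s,\beta}(N)$ be the random graph described in the context. Then there exists a constant $c=c(s,\beta)>0$, independent of $N$, such that $$\lim_{N\to\infty}\Pr\left[\tau(G)\ge cN^2\right]=1 .$$
   Context: Long-range percolation on the cycle: for a positive integer $N$, start with the cycle graph on vertex set $\mathbb{Z}/N\mathbb{Z}$ (edges between $x$ and $x+1$). For $x,y\in\mathbb{Z}/N\mathbb{Z}$ let $\|x-y\|=\min\{|x-y|,N-|x-y|\}$ (the cycle distance). For every pair $x\neq y$, independently, an edge between $x$ and $y$ is added with probability $1-\exp(-\beta\|x-y\|^{-s})$. The resulting random graph is $G_{s,\beta}(N)$. Edges are regarded as oriented: each undirected edge $\{x,y\}$ contributes both $(x,y)$ and $(y,x)$ to the edge set $E(G)$, and $\deg(x)$ is the degree of $x$. The random walk considered is the lazy random walk on $G$: transition matrix $P(x,y)=\frac{1}{2\deg(x)}$ if $x,y$ are adjacent and $P(x,x)=\frac12$. Its stationary distribution is $\pi(x)=\deg(x)/|E(G)|$. The variational distance at time $t$ from start $x$ is $\Delta_x(t)=\frac12\sum_{y\in V(G)}|P^t(x,y)-\pi(y)|$, where $P^t$ is the $t$-th power of $P$. Define $\tau_x(\varepsilon)=\min\{t:\ \Delta_x(t')\le\varepsilon \text{ for all } t'\ge t\}$ and the mixing time $\tau(G)=\max_{x\in V(G)}\tau_x(1/4)$. *)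

theory Defs
  imports "HOL-Analysis.Analysis"
begin

text \<open>Vertices of the cycle Z/NZ are represented by the naturals 0..N-1.\<close>

definition cdist :: "nat \<Rightarrow> nat \<Rightarrow> nat \<Rightarrow> nat" where
  "cdist N x y = min (if x \<le> y then y - x else x - y) (N - (if x \<le> y then y - x else x - y))"

text \<open>Unordered pairs {x,y}, x \<noteq> y, encoded as (x,y) with x < y.\<close>
definition vpairs :: "nat \<Rightarrow> (nat \<times> nat) set" where
  "vpairs N = {(x, y). x < y \<and> y < N}"

definition edge_prob :: "real \<Rightarrow> real \<Rightarrow> nat \<Rightarrow> nat \<times> nat \<Rightarrow> real" where
  "edge_prob s \<beta> N e = 1 - exp (- \<beta> * (real (cdist N (fst e) (snd e))) powr (- s))"

text \<open>Probability of an event (set of realisations S of added long-range edges) under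
  independent edges: S ranges over subsets of vpairs N.\<close>
definition graph_prob :: "real \<Rightarrow> real \<Rightarrow> nat \<Rightarrow> (nat \<times> nat) set set \<Rightarrow> real" where
  "graph_prob s \<beta> N A =
     (\<Sum>S\<in>Pow (vpairs N) \<inter> A.
        \<Prod>e\<in>vpairs N. (if e \<in> S then edge_prob s \<beta> N e else 1 - edge_prob s \<beta> N e))"

definition adj :: "nat \<Rightarrow> (nat \<times> nat) set \<Rightarrow> nat \<Rightarrow> nat \<Rightarrow> bool" where
  "adj N S x y \<longleftrightarrow> x < N \<and> y < N \<and> x \<noteq> y \<and>
     (cdist N x y = 1 \<or> (min x y, max x y) \<in> S)"

definition deg :: "nat \<Rightarrow> (nat \<times> nat) set \<Rightarrow> nat \<Rightarrow> nat" where
  "deg N S x = card {y. y < N \<and> adj N S x y}"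

definition lazyP :: "nat \<Rightarrow> (nat \<times> nat) set \<Rightarrow> nat \<Rightarrow> nat \<Rightarrow> real" where
  "lazyP N S x y = (if x = y then 1/2
                    else if adj N S x y then 1 / (2 * real (deg N S x)) else 0)"

fun lazyPt :: "nat \<Rightarrow> (nat \<times> nat) set \<Rightarrow> nat \<Rightarrow> nat \<Rightarrow> nat \<Rightarrow> real" where
  "lazyPt N S 0 x y = (if x = y then 1 else 0)"
| "lazyPt N S (Suc t) x y = (\<Sum>z<N. lazyPt N S t x z * lazyP N S z y)"

text \<open>Stationary distribution deg(x)/|E(G)|, with |E(G)| = number of oriented edges.\<close>
definition stat :: "nat \<Rightarrow> (nat \<times> nat) set \<Rightarrow> nat \<Rightarrow> real" where
  "stat N S y = real (deg N S y) / real (\<Sum>z<N. deg N S z)"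

definition var_dist :: "nat \<Rightarrow> (nat \<times> nat) set \<Rightarrow> nat \<Rightarrow> nat \<Rightarrow> real" where
  "var_dist N S x t = (1/2) * (\<Sum>y<N. \<bar>lazyPt N S t x y - stat N S y\<bar>)"

definition tau_x :: "nat \<Rightarrow> (nat \<times> nat) set \<Rightarrow> nat \<Rightarrow> real \<Rightarrow> nat" where
  "tau_x N S x \<epsilon> = (LEAST t. \<forall>t'\<ge>t. var_dist N S x t' \<le> \<epsilon>)"

definition mixing_time :: "nat \<Rightarrow> (nat \<times> nat) set \<Rightarrow> nat" where
  "mixing_time N S = Max ((\<lambda>x. tau_x N S x (1/4)) ` {..<N})"

end

theory Submission
  imports Defs "HOL-Real_Asymp.Real_Asymp"
begin


definition wtg :: "'a set \<Rightarrow> ('a \<Rightarrow> real) \<Rightarrow> 'a set \<Rightarrow> real" where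
  "wtg V p X = (\<Prod>e\<in>V. if e \<in> X then p e else 1 - p e)"

definition Exg :: "'a set \<Rightarrow> ('a \<Rightarrow> real) \<Rightarrow> ('a set \<Rightarrow> real) \<Rightarrow> real" where
  "Exg V p f = (\<Sum>X\<in>Pow V. wtg V p X * f X)"

lemma sum_pow_prod:
  fixes h :: "'a \<Rightarrow> bool \<Rightarrow> real"
  assumes "finite V"
  shows "(\<Sum>X\<in>Pow V. \<Prod>e\<in>V. h e (e \<in> X)) = (\<Prod>e\<in>V. h e True + h e False)"
proof -
  have "(\<Prod>e\<in>V. h e True + h e False) =
     (\<Sum>X\<in>Pow V. (\<Prod>e\<in>X. h e True) * (\<Prod>e\<in>V-X. h e False))"
    by (rule prod_add[OF assms])
  also have "\<dots> = (\<Sum>X\<in>Pow V. \<Prod>e\<in>V. h e (e \<in> X))"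
  proof (rule sum.cong[OF refl])
    fix X assume X: "X \<in> Pow V"
    have fX: "finite X" using X assms finite_subset by blast
    have "(\<Prod>e\<in>V. h e (e \<in> X)) = (\<Prod>e\<in>X. h e (e \<in> X)) * (\<Prod>e\<in>V-X. h e (e \<in> X))"
      using prod.subset_diff[of X V "\<lambda>e. h e (e \<in> X)"] X assms by (auto simp: mult.commute)
    also have "\<dots> = (\<Prod>e\<in>X. h e True) * (\<Prod>e\<in>V-X. h e False)"
      by (auto intro!: arg_cong2[where f="(*)"] prod.cong)
    finally show "(\<Prod>e\<in>X. h e True) * (\<Prod>e\<in>V-X. h e False) = (\<Prod>e\<in>V. h e (e \<in> X))" by simp
  qed
  finally show ?thesis by simp
qed

lemma Exg_prod:
  assumes "finite V"
  shows "Exg V p (\<lambda>X. \<Prod>e\<in>V. u e (e \<in> X)) = (\<Prod>e\<in>V. p e * u e True + (1 - p e) * u e False)"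
proof -
  have "Exg V p (\<lambda>X. \<Prod>e\<in>V. u e (e \<in> X)) =
     (\<Sum>X\<in>Pow V. \<Prod>e\<in>V. (\<lambda>e b. if b then p e * u e True else (1 - p e) * u e False) e (e \<in> X))"
    unfolding Exg_def wtg_def by (auto simp: prod.distrib[symmetric] intro!: sum.cong prod.cong)
  also have "\<dots> = (\<Prod>e\<in>V. p e * u e True + (1 - p e) * u e False)"
    by (subst sum_pow_prod[OF assms]) simp
  finally show ?thesis .
qed

lemma Exg_one: "finite V \<Longrightarrow> Exg V p (\<lambda>_. 1) = 1"
  using Exg_prod[of V p "\<lambda>_ _. 1"] by simp

lemma Exg_add: "Exg V p (\<lambda>X. f X + g X) = Exg V p f + Exg V p g"
  unfolding Exg_def by (simp add: distrib_left sum.distrib)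

lemma Exg_diff: "Exg V p (\<lambda>X. f X - g X) = Exg V p f - Exg V p g"
  unfolding Exg_def by (simp add: right_diff_distrib sum_subtractf)

lemma Exg_cmult: "Exg V p (\<lambda>X. c * f X) = c * Exg V p f"
  unfolding Exg_def by (simp add: sum_distrib_left mult_ac)

lemma Exg_const: "finite V \<Longrightarrow> Exg V p (\<lambda>X. c) = c"
  using Exg_cmult[of V p c "\<lambda>_. 1"] Exg_one[of V p] by simp

lemma Exg_sum: "Exg V p (\<lambda>X. \<Sum>i\<in>I. f i X) = (\<Sum>i\<in>I. Exg V p (f i))"
  unfolding Exg_def by (simp add: sum_distrib_left sum.swap[of _ I])

lemma wtg_nonneg: "(\<And>e. e \<in> V \<Longrightarrow> 0 \<le> p e \<and> p e \<le> 1) \<Longrightarrow> 0 \<le> wtg V p X"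
  unfolding wtg_def by (intro prod_nonneg) auto

lemma Exg_mono:
  assumes "\<And>e. e \<in> V \<Longrightarrow> 0 \<le> p e \<and> p e \<le> 1" "\<And>X. X \<subseteq> V \<Longrightarrow> f X \<le> g X"
  shows "Exg V p f \<le> Exg V p g"
  unfolding Exg_def using assms by (auto intro!: sum_mono mult_left_mono wtg_nonneg)

lemma Exg_nonneg:
  assumes "\<And>e. e \<in> V \<Longrightarrow> 0 \<le> p e \<and> p e \<le> 1" "\<And>X. X \<subseteq> V \<Longrightarrow> 0 \<le> f X"
  shows "0 \<le> Exg V p f"
  using Exg_mono[of V p "\<lambda>_. 0" f] assms unfolding Exg_def by simp

definition Prg :: "'a set \<Rightarrow> ('a \<Rightarrow> real) \<Rightarrow> 'a set set \<Rightarrow> real" where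
  "Prg V p A = Exg V p (\<lambda>X. of_bool (X \<in> A))"

lemma Prg_eq: "Prg V p A = (\<Sum>X\<in>Pow V \<inter> A. wtg V p X)" if "finite V"
proof -
  have "Prg V p A = (\<Sum>X\<in>Pow V. if X \<in> A then wtg V p X else 0)"
    unfolding Prg_def Exg_def by (auto intro!: sum.cong)
  also have "\<dots> = (\<Sum>X\<in>Pow V \<inter> A. wtg V p X)"
    by (rule sum.inter_restrict[symmetric]) (simp add: that)
  finally show ?thesis .
qed

lemma Prg_compl:
  assumes "finite V"
  shows "Prg V p A = 1 - Prg V p (- A)"
proof -
  have "Prg V p A + Prg V p (- A) = Exg V p (\<lambda>_. 1)"
    unfolding Prg_def Exg_add[symmetric] by (auto intro!: arg_cong[where f="Exg V p"])
  then show ?thesis using Exg_one[OF assms] by simp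
qed

lemma Prg_mono:
  assumes "\<And>e. e \<in> V \<Longrightarrow> 0 \<le> p e \<and> p e \<le> 1" "\<And>X. X \<subseteq> V \<Longrightarrow> X \<in> A \<Longrightarrow> X \<in> B"
  shows "Prg V p A \<le> Prg V p B"
  unfolding Prg_def by (rule Exg_mono) (use assms in auto)

lemma Prg_le1:
  assumes "finite V" "\<And>e. e \<in> V \<Longrightarrow> 0 \<le> p e \<and> p e \<le> 1"
  shows "Prg V p A \<le> 1"
proof -
  have "Prg V p A \<le> Prg V p UNIV" by (rule Prg_mono) (use assms in auto)
  also have "Prg V p UNIV = 1" unfolding Prg_def using Exg_one[OF assms(1)] by simp
  finally show ?thesis .
qed

lemma Prg_union:
  assumes "\<And>e. e \<in> V \<Longrightarrow> 0 \<le> p e \<and> p e \<le> 1"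
  shows "Prg V p (A \<union> B) \<le> Prg V p A + Prg V p B"
  unfolding Prg_def Exg_add[symmetric] by (rule Exg_mono) (use assms in auto)

lemma markov_g:
  assumes "\<And>e. e \<in> V \<Longrightarrow> 0 \<le> p e \<and> p e \<le> 1" "\<And>X. X \<subseteq> V \<Longrightarrow> 0 \<le> f X" "a > 0"
  shows "Prg V p {X. f X \<ge> a} \<le> Exg V p f / a"
proof -
  have "Prg V p {X. f X \<ge> a} \<le> Exg V p (\<lambda>X. f X / a)"
    unfolding Prg_def by (rule Exg_mono) (use assms in auto)
  also have "\<dots> = Exg V p f / a" using Exg_cmult[of V p "1/a" f] by simp
  finally show ?thesis .
qed

lemma Exg_cov1:
  assumes "finite V"
  shows "Exg V p (\<lambda>X. (f X - a) * (g X - b)) = Exg V p (\<lambda>X. f X * g X) - a * Exg V p g - b * Exg V p f + a * b"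
proof -
  have "(\<lambda>X. (f X - a) * (g X - b)) = (\<lambda>X. (f X * g X - a * g X) - (b * f X - a * b))"
    by (auto simp: algebra_simps)
  then show ?thesis by (simp add: Exg_diff Exg_cmult Exg_const[OF assms])
qed

lemma var_sum_g:
  assumes "finite V"
  shows "Exg V p (\<lambda>X. ((\<Sum>i\<in>I. f i X) - (\<Sum>i\<in>I. Exg V p (f i)))^2)
    = (\<Sum>i\<in>I. \<Sum>j\<in>I. Exg V p (\<lambda>X. f i X * f j X) - Exg V p (f i) * Exg V p (f j))"
proof -
  let ?m = "\<lambda>i. Exg V p (f i)"
  have "\<And>X. ((\<Sum>i\<in>I. f i X) - (\<Sum>i\<in>I. ?m i))^2 =
     (\<Sum>i\<in>I. \<Sum>j\<in>I. (f i X - ?m i) * (f j X - ?m j))"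
    by (simp add: power2_eq_square sum_subtractf[symmetric] sum_product)
  then have "Exg V p (\<lambda>X. ((\<Sum>i\<in>I. f i X) - (\<Sum>i\<in>I. ?m i))^2) =
    (\<Sum>i\<in>I. \<Sum>j\<in>I. Exg V p (\<lambda>X. (f i X - ?m i) * (f j X - ?m j)))"
    by (simp add: Exg_sum)
  also have "\<dots> = (\<Sum>i\<in>I. \<Sum>j\<in>I. Exg V p (\<lambda>X. f i X * f j X) - ?m i * ?m j)"
    by (intro sum.cong refl) (simp add: Exg_cov1[OF assms])
  finally show ?thesis .
qed

lemma chebyshev_g:
  assumes "finite V" "\<And>e. e \<in> V \<Longrightarrow> 0 \<le> p e \<and> p e \<le> 1" "a > 0"
  shows "Prg V p {X. \<bar>Z X - Exg V p Z\<bar> \<ge> a} \<le> Exg V p (\<lambda>X. (Z X - Exg V p Z)^2) / a^2"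
proof -
  have "Prg V p {X. \<bar>Z X - Exg V p Z\<bar> \<ge> a} \<le> Prg V p {X. (Z X - Exg V p Z)^2 \<ge> a^2}"
    by (rule Prg_mono) (use assms in \<open>auto simp: abs_le_square_iff[symmetric]\<close>)
  also have "\<dots> \<le> Exg V p (\<lambda>X. (Z X - Exg V p Z)^2) / a^2"
    by (rule markov_g) (use assms in auto)
  finally show ?thesis .
qed


lemma cdist_sym: "cdist N x y = cdist N y x"
  unfolding cdist_def by auto

lemma adj_sym: "adj N S x y = adj N S y x"
  unfolding adj_def by (auto simp: cdist_sym min.commute max.commute)

lemma adj_irrefl: "\<not> adj N S x x"
  unfolding adj_def by auto

lemma cdist_succ: "2 \<le> N \<Longrightarrow> x < N \<Longrightarrow> cdist N x ((x + 1) mod N) = 1"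
proof (cases "x + 1 < N")
  case True
  assume "2 \<le> N"
  then show ?thesis using True unfolding cdist_def by auto
next
  case False
  assume "2 \<le> N" "x < N"
  then have "x = N - 1" using False by auto
  then have "(x + 1) mod N = 0" using \<open>2 \<le> N\<close> by auto
  then show ?thesis using \<open>x = N - 1\<close> \<open>2 \<le> N\<close> unfolding cdist_def by auto
qed

locale chain =
  fixes N :: nat and S :: "(nat \<times> nat) set"
  assumes N3: "3 \<le> N"
begin

abbreviation "P \<equiv> lazyP N S"
abbreviation "Pt \<equiv> lazyPt N S"
abbreviation "\<pi> \<equiv> stat N S"
abbreviation "D \<equiv> (\<Sum>z<N. deg N S z)"

lemma succ_ne: "x < N \<Longrightarrow> (x + 1) mod N \<noteq> x"
proof (cases "x + 1 < N")
  case True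
  then show ?thesis by simp
next
  case False
  assume x: "x < N"
  then have "x + 1 = N" using False by simp
  then have "(x + 1) mod N = 0" by simp
  then show ?thesis using \<open>x + 1 = N\<close> N3 by simp
qed

lemma adj_succ: "x < N \<Longrightarrow> adj N S x ((x + 1) mod N)"
  unfolding adj_def using N3 cdist_succ[of N x] succ_ne[of x] by auto

lemma deg_set_finite: "finite {y. y < N \<and> adj N S x y}"
  by auto

lemma deg_pos: "x < N \<Longrightarrow> 1 \<le> deg N S x"
proof -
  assume x: "x < N"
  have "(x + 1) mod N \<in> {y. y < N \<and> adj N S x y}"
    using adj_succ[OF x] x N3 by auto
  then have "card {y. y < N \<and> adj N S x y} \<noteq> 0" using deg_set_finite[of x] by auto
  then show ?thesis unfolding deg_def by linarith
qed

lemma deg_le: "deg N S x \<le> N"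
proof -
  have "{y. y < N \<and> adj N S x y} \<subseteq> {..<N}" by auto
  then show ?thesis unfolding deg_def by (metis card_lessThan card_mono finite_lessThan)
qed

lemma D_ge: "real N \<le> real D"
proof -
  have "(\<Sum>z<N. (1::nat)) \<le> D" by (intro sum_mono) (use deg_pos in force)
  then have "N \<le> D" by simp
  then show ?thesis by (simp only: of_nat_le_iff)
qed

lemma D_pos: "0 < real D"
  using D_ge N3 by linarith

lemma P_nonneg: "0 \<le> P x y"
  unfolding lazyP_def by auto

lemma P_offdiag: "x \<noteq> y \<Longrightarrow> P x y = of_bool (adj N S x y) / (2 * real (deg N S x))"
  unfolding lazyP_def by auto

lemma P_diag: "P x x = 1/2"
  unfolding lazyP_def by auto

lemma P_eq: "P x y = of_bool (x = y) / 2 + of_bool (adj N S x y) / (2 * real (deg N S x))"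
  unfolding lazyP_def using adj_irrefl[of N S x] by auto

lemma P_rowsum: "x < N \<Longrightarrow> (\<Sum>y<N. P x y) = 1"
proof -
  assume x: "x < N"
  have "(\<Sum>y<N. P x y) = (\<Sum>y<N. of_bool (x = y)) / 2 + (\<Sum>y<N. of_bool (adj N S x y)) / (2 * real (deg N S x))"
    by (simp only: P_eq sum.distrib sum_divide_distrib)
  also have "(\<Sum>y<N. of_bool (x = y) :: real) = 1"
  proof -
    have "{..<N} \<inter> {y. x = y} = {x}" using x by auto
    then show ?thesis by simp
  qed
  also have "(\<Sum>y<N. of_bool (adj N S x y) :: real) = real (deg N S x)"
  proof -
    have "{..<N} \<inter> {y. adj N S x y} = {y. y < N \<and> adj N S x y}" by auto
    then show ?thesis unfolding deg_def by simp
  qed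
  finally show ?thesis using deg_pos[OF x] by simp
qed

lemma P_zero_out: "y \<ge> N \<Longrightarrow> x < N \<Longrightarrow> P x y = 0"
  unfolding lazyP_def adj_def by auto

lemma pi_def': "\<pi> x = real (deg N S x) / real D"
  unfolding stat_def by simp

lemma pi_nonneg: "0 \<le> \<pi> x"
  unfolding stat_def by (intro divide_nonneg_nonneg) (simp_all add: sum_nonneg)

lemma pi_sum: "(\<Sum>x<N. \<pi> x) = 1"
  unfolding stat_def using D_pos by (simp add: sum_divide_distrib[symmetric])

lemma pi_P_adj: "x \<noteq> y \<Longrightarrow> x < N \<Longrightarrow> \<pi> x * P x y = of_bool (adj N S x y) / (2 * real D)"
  using deg_pos[of x] D_pos by (simp add: P_offdiag pi_def' field_simps)

lemma reversible: "x < N \<Longrightarrow> y < N \<Longrightarrow> \<pi> x * P x y = \<pi> y * P y x"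
  by (cases "x = y") (simp_all add: pi_P_adj adj_sym)

lemma stationary: "y < N \<Longrightarrow> (\<Sum>x<N. \<pi> x * P x y) = \<pi> y"
proof -
  assume y: "y < N"
  have "(\<Sum>x<N. \<pi> x * P x y) = (\<Sum>x<N. \<pi> y * P y x)"
    by (intro sum.cong refl) (use y reversible in auto)
  also have "\<dots> = \<pi> y" using P_rowsum[OF y] by (simp add: sum_distrib_left[symmetric])
  finally show ?thesis .
qed

lemma Pt_nonneg: "0 \<le> Pt t x y"
  by (induction t arbitrary: y) (auto intro!: sum_nonneg mult_nonneg_nonneg P_nonneg)

lemma Pt_rowsum: "x < N \<Longrightarrow> (\<Sum>y<N. Pt t x y) = 1"
proof (induction t)
  case 0
  then show ?case by (simp add: sum.delta)
next
  case (Suc t)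
  have "(\<Sum>y<N. Pt (Suc t) x y) = (\<Sum>z<N. Pt t x z * (\<Sum>y<N. P z y))"
    by (simp only: lazyPt.simps sum_distrib_left) (rule sum.swap)
  also have "\<dots> = (\<Sum>z<N. Pt t x z)" by (intro sum.cong refl) (simp add: P_rowsum)
  finally show ?case using Suc by simp
qed

lemma Pt_semigroup: "y < N \<Longrightarrow> Pt (t + n) x y = (\<Sum>z<N. Pt t x z * Pt n z y)"
proof (induction n arbitrary: y)
  case 0
  then show ?case by (simp add: sum.delta' if_distrib cong: if_cong)
next
  case (Suc n)
  have "Pt (t + Suc n) x y = (\<Sum>w<N. Pt (t + n) x w * P w y)" by simp
  also have "\<dots> = (\<Sum>w<N. (\<Sum>z<N. Pt t x z * Pt n z w) * P w y)"
    using Suc.IH by simp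
  also have "\<dots> = (\<Sum>z<N. Pt t x z * (\<Sum>w<N. Pt n z w * P w y))"
    by (simp only: sum_distrib_left sum_distrib_right mult.assoc) (rule sum.swap)
  finally show ?case by simp
qed

lemma pi_Pt: "y < N \<Longrightarrow> (\<Sum>x<N. \<pi> x * Pt t x y) = \<pi> y"
proof (induction t arbitrary: y)
  case 0
  then show ?case by (simp add: sum.delta' if_distrib cong: if_cong)
next
  case (Suc t)
  have "(\<Sum>x<N. \<pi> x * Pt (Suc t) x y) = (\<Sum>z<N. (\<Sum>x<N. \<pi> x * Pt t x z) * P z y)"
    by (simp only: lazyPt.simps sum_distrib_left sum_distrib_right mult.assoc) (rule sum.swap)
  also have "\<dots> = (\<Sum>z<N. \<pi> z * P z y)" using Suc.IH by simp
  finally show ?case using stationary[OF Suc.prems] by simp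
qed

lemma tv_contract:
  fixes \<eta> :: "nat \<Rightarrow> real" and K :: "nat \<Rightarrow> nat \<Rightarrow> real"
  assumes K0: "\<And>z y. z < N \<Longrightarrow> y < N \<Longrightarrow> \<epsilon> \<le> K z y"
    and Ks: "\<And>z. z < N \<Longrightarrow> (\<Sum>y<N. K z y) = 1"
    and eta0: "(\<Sum>z<N. \<eta> z) = 0"
  shows "(\<Sum>y<N. \<bar>\<Sum>z<N. \<eta> z * K z y\<bar>) \<le> (1 - real N * \<epsilon>) * (\<Sum>z<N. \<bar>\<eta> z\<bar>)"
proof -
  have "(\<Sum>y<N. \<bar>\<Sum>z<N. \<eta> z * K z y\<bar>) = (\<Sum>y<N. \<bar>\<Sum>z<N. \<eta> z * (K z y - \<epsilon>)\<bar>)"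
  proof (intro sum.cong refl)
    fix y
    have "(\<Sum>z<N. \<eta> z * (K z y - \<epsilon>)) = (\<Sum>z<N. \<eta> z * K z y) - \<epsilon> * (\<Sum>z<N. \<eta> z)"
      by (simp add: algebra_simps sum_subtractf sum_distrib_left)
    then show "\<bar>\<Sum>z<N. \<eta> z * K z y\<bar> = \<bar>\<Sum>z<N. \<eta> z * (K z y - \<epsilon>)\<bar>" using eta0 by simp
  qed
  also have "\<dots> \<le> (\<Sum>y<N. \<Sum>z<N. \<bar>\<eta> z\<bar> * (K z y - \<epsilon>))"
    by (intro sum_mono order.trans[OF sum_abs]) (auto simp: abs_mult K0)
  also have "\<dots> = (\<Sum>z<N. \<bar>\<eta> z\<bar> * (\<Sum>y<N. K z y - \<epsilon>))"
    by (simp only: sum_distrib_left) (rule sum.swap)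
  also have "\<dots> = (\<Sum>z<N. \<bar>\<eta> z\<bar> * (1 - real N * \<epsilon>))"
    by (intro sum.cong refl) (simp add: sum_subtractf Ks)
  also have "\<dots> = (\<Sum>z<N. \<bar>\<eta> z\<bar>) * (1 - real N * \<epsilon>)" by (rule sum_distrib_right[symmetric])
  finally show ?thesis by (simp only: mult.commute)
qed

lemma var_dist_eq: "var_dist N S x t = (1/2) * (\<Sum>y<N. \<bar>Pt t x y - \<pi> y\<bar>)"
  unfolding var_dist_def by simp

lemma Pt_minus_pi: "y < N \<Longrightarrow> x < N \<Longrightarrow>
   Pt (t + n) x y - \<pi> y = (\<Sum>z<N. (Pt t x z - \<pi> z) * Pt n z y)"
  by (simp add: Pt_semigroup left_diff_distrib sum_subtractf pi_Pt)

lemma var_dist_contract: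
  assumes x: "x < N"
    and K0: "\<And>z y. z < N \<Longrightarrow> y < N \<Longrightarrow> \<epsilon> \<le> Pt n z y"
  shows "var_dist N S x (t + n) \<le> (1 - real N * \<epsilon>) * var_dist N S x t"
proof -
  have "(\<Sum>y<N. \<bar>Pt (t + n) x y - \<pi> y\<bar>) = (\<Sum>y<N. \<bar>\<Sum>z<N. (Pt t x z - \<pi> z) * Pt n z y\<bar>)"
    by (intro sum.cong refl) (simp add: Pt_minus_pi x)
  also have "\<dots> \<le> (1 - real N * \<epsilon>) * (\<Sum>z<N. \<bar>Pt t x z - \<pi> z\<bar>)"
    by (rule tv_contract) (use K0 Pt_rowsum x pi_sum in \<open>auto simp: sum_subtractf\<close>)
  finally show ?thesis unfolding var_dist_eq by simp
qed

lemma var_dist_mono_step: "x < N \<Longrightarrow> var_dist N S x (t + 1) \<le> var_dist N S x t"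
proof -
  assume x: "x < N"
  have "var_dist N S x (t + 1) \<le> (1 - real N * 0) * var_dist N S x t"
    by (rule var_dist_contract[OF x Pt_nonneg])
  then show ?thesis by simp
qed

lemma var_dist_mono:
  assumes x: "x < N" and tt: "t \<le> t'"
  shows "var_dist N S x t' \<le> var_dist N S x t"
  using tt
proof (induction t' rule: dec_induct)
  case base then show ?case by simp
next
  case (step m) then show ?case using var_dist_mono_step[OF x, of m] by simp
qed

lemma var_dist_le1: "x < N \<Longrightarrow> var_dist N S x t \<le> 1"
proof -
  assume x: "x < N"
  have "(\<Sum>y<N. \<bar>Pt t x y - \<pi> y\<bar>) \<le> (\<Sum>y<N. Pt t x y + \<pi> y)"
    by (intro sum_mono) (use Pt_nonneg pi_nonneg in \<open>auto simp: abs_le_iff\<close>)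
  also have "\<dots> = 2" by (simp add: sum.distrib Pt_rowsum x pi_sum)
  finally show ?thesis unfolding var_dist_eq by simp
qed

lemma Pt_lower:
  assumes x: "x < N" and j: "j \<le> n"
  shows "(1 / (2 * real N)) ^ n \<le> Pt n x ((x + j) mod N)"
  using j
proof (induction n arbitrary: j)
  case 0
  then show ?case using x by simp
next
  case (Suc n)
  let ?c = "1 / (2 * real N)"
  have c0: "0 \<le> ?c" by simp
  show ?case
  proof (cases "j \<le> n")
    case True
    let ?z = "(x + j) mod N"
    have z: "?z < N" using N3 by simp
    have "Pt (Suc n) x ?z = (\<Sum>w<N. Pt n x w * P w ?z)" by simp
    also have "\<dots> \<ge> Pt n x ?z * P ?z ?z"
      by (rule member_le_sum) (use z Pt_nonneg P_nonneg in auto)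
    finally have a: "Pt n x ?z * P ?z ?z \<le> Pt (Suc n) x ?z" .
    have b: "?c ^ n * ?c \<le> Pt n x ?z * P ?z ?z"
      using Suc.IH[OF True] N3 by (intro mult_mono) (auto simp: P_diag Pt_nonneg field_simps)
    show ?thesis using a b by simp
  next
    case False
    then have jn: "j = Suc n" using Suc.prems by simp
    let ?z = "(x + n) mod N"
    have z: "?z < N" using N3 by simp
    have zy: "(?z + 1) mod N = (x + j) mod N" using jn by (simp add: mod_Suc_eq)
    have "Pt (Suc n) x ((x + j) mod N) = (\<Sum>w<N. Pt n x w * P w ((x + j) mod N))" by simp
    also have "\<dots> \<ge> Pt n x ?z * P ?z ((x + j) mod N)"
      by (rule member_le_sum) (use z Pt_nonneg P_nonneg in auto)
    finally have a: "Pt n x ?z * P ?z ((x + j) mod N) \<le> Pt (Suc n) x ((x + j) mod N)" .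
    have Pz: "?c \<le> P ?z ((x + j) mod N)"
    proof -
      have "P ?z ((x + j) mod N) = 1 / (2 * real (deg N S ?z))"
        using zy[symmetric] adj_succ[OF z] succ_ne[OF z] by (simp add: P_offdiag)
      moreover have "real (deg N S ?z) \<le> real N" using deg_le by simp
      moreover have "1 \<le> real (deg N S ?z)" using deg_pos[OF z] by simp
      ultimately show ?thesis by (simp add: frac_le)
    qed
    have b: "?c ^ n * ?c \<le> Pt n x ?z * P ?z ((x + j) mod N)"
      using Suc.IH[of n] N3 Pz by (intro mult_mono) (auto simp: Pt_nonneg)
    show ?thesis using a b by simp
  qed
qed

lemma Pt_lower_all:
  assumes x: "x < N" and y: "y < N"
  shows "(1 / (2 * real N)) ^ (N - 1) \<le> Pt (N - 1) x y"
proof -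
  define j where "j = (y + N - x) mod N"
  have "j < N" unfolding j_def using N3 by simp
  then have j: "j \<le> N - 1" by linarith
  have "(x + j) mod N = (x + (y + N - x)) mod N" unfolding j_def by (simp add: mod_add_right_eq)
  also have "x + (y + N - x) = y + N" using x by simp
  also have "(y + N) mod N = y" using y by simp
  finally have "(x + j) mod N = y" .
  then show ?thesis using Pt_lower[OF x j] by simp
qed

lemma eventually_mixed: "x < N \<Longrightarrow> \<exists>t. \<forall>t'\<ge>t. var_dist N S x t' \<le> 1/4"
proof -
  assume x: "x < N"
  define \<epsilon> where "\<epsilon> = (1 / (2 * real N)) ^ (N - 1)"
  define r where "r = 1 - real N * \<epsilon>"
  have e0: "0 < \<epsilon>" unfolding \<epsilon>_def using N3 by simp
  have r1: "r < 1" unfolding r_def using e0 N3 by simp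
  have r0: "0 \<le> r"
  proof -
    have "(\<Sum>y<N. \<epsilon>) \<le> (\<Sum>y<N. Pt (N - 1) x y)"
      by (intro sum_mono) (use Pt_lower_all x in \<open>auto simp: \<epsilon>_def\<close>)
    then show ?thesis unfolding r_def using Pt_rowsum[OF x] by simp
  qed
  have step: "var_dist N S x (m * (N - 1)) \<le> r ^ m" for m
  proof (induction m)
    case 0
    then show ?case using var_dist_le1[OF x] by simp
  next
    case (Suc m)
    have "var_dist N S x (m * (N - 1) + (N - 1)) \<le> r * var_dist N S x (m * (N - 1))"
      unfolding r_def by (rule var_dist_contract[OF x]) (use Pt_lower_all in \<open>auto simp: \<epsilon>_def\<close>)
    also have "\<dots> \<le> r * r ^ m" using Suc r0 by (intro mult_left_mono) auto
    finally show ?case by (simp add: add.commute)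
  qed
  obtain m where m: "r ^ m < 1/4" using real_arch_pow_inv[of "1/4" r] r0 r1 by auto
  show ?thesis
  proof (intro exI allI impI)
    fix t' assume "m * (N - 1) \<le> t'"
    then have "var_dist N S x t' \<le> var_dist N S x (m * (N - 1))" by (rule var_dist_mono[OF x])
    also have "\<dots> \<le> 1/4" using step[of m] m by simp
    finally show "var_dist N S x t' \<le> 1/4" .
  qed
qed

lemma mixing_time_prop:
  assumes x: "x < N"
  shows "var_dist N S x (mixing_time N S) \<le> 1/4"
proof -
  have "tau_x N S x (1/4) \<le> mixing_time N S"
    unfolding mixing_time_def by (rule Max_ge) (use x in auto)
  moreover obtain t0 where t0: "\<forall>t'\<ge>t0. var_dist N S x t' \<le> 1/4"
    using eventually_mixed[OF x] by blast
  have "\<forall>t'\<ge>tau_x N S x (1/4). var_dist N S x t' \<le> 1/4"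
    unfolding tau_x_def by (rule LeastI[of _ t0]) (rule t0)
  ultimately show ?thesis by blast
qed

end


context chain
begin

definition Pop :: "(nat \<Rightarrow> real) \<Rightarrow> nat \<Rightarrow> real" where
  "Pop f x = (\<Sum>y<N. P x y * f y)"

definition ip :: "(nat \<Rightarrow> real) \<Rightarrow> (nat \<Rightarrow> real) \<Rightarrow> real" where
  "ip u v = (\<Sum>x<N. \<pi> x * u x * v x)"

definition piE :: "(nat \<Rightarrow> real) \<Rightarrow> real" where
  "piE f = (\<Sum>y<N. \<pi> y * f y)"

lemma Pt_Pop: "x < N \<Longrightarrow> (\<Sum>y<N. Pt t x y * f y) = (Pop ^^ t) f x"
proof (induction t arbitrary: f)
  case 0
  have "(\<Sum>y<N. Pt 0 x y * f y) = (\<Sum>y<N. if x = y then f y else 0)"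
    by (intro sum.cong refl) simp
  also have "\<dots> = f x" using 0 by (simp add: sum.delta)
  finally show ?case by simp
next
  case (Suc t)
  have "(\<Sum>y<N. Pt (Suc t) x y * f y) = (\<Sum>y<N. \<Sum>z<N. Pt t x z * (P z y * f y))"
    by (simp add: sum_distrib_right mult.assoc)
  also have "\<dots> = (\<Sum>z<N. \<Sum>y<N. Pt t x z * (P z y * f y))" by (rule sum.swap)
  also have "\<dots> = (\<Sum>z<N. Pt t x z * Pop f z)"
    unfolding Pop_def by (simp add: sum_distrib_left)
  also have "\<dots> = (Pop ^^ t) (Pop f) x" by (rule Suc.IH[OF Suc.prems])
  also have "\<dots> = (Pop ^^ Suc t) f x" by (simp only: funpow_Suc_right comp_def)
  finally show ?case .
qed

lemma Pop_diff: "Pop (\<lambda>y. f y - g y) x = Pop f x - Pop g x"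
  unfolding Pop_def by (simp add: right_diff_distrib sum_subtractf)

lemma Pop_const: "x < N \<Longrightarrow> Pop (\<lambda>y. c) x = c"
  unfolding Pop_def by (simp add: sum_distrib_right[symmetric] P_rowsum)

lemma piE_Pop: "piE (Pop f) = piE f"
proof -
  have "piE (Pop f) = (\<Sum>x<N. \<Sum>y<N. \<pi> x * P x y * f y)"
    unfolding piE_def Pop_def by (simp add: sum_distrib_left mult.assoc)
  also have "\<dots> = (\<Sum>y<N. \<Sum>x<N. \<pi> x * P x y * f y)" by (rule sum.swap)
  also have "\<dots> = (\<Sum>y<N. (\<Sum>x<N. \<pi> x * P x y) * f y)" by (simp add: sum_distrib_right)
  also have "\<dots> = piE f" unfolding piE_def by (intro sum.cong refl) (simp add: stationary)
  finally show ?thesis .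
qed

lemma piE_funpow: "piE ((Pop ^^ n) f) = piE f"
  by (induction n) (simp_all add: piE_Pop)

lemma osc_bound:
  assumes x: "x < N" and lo: "\<And>y. y < N \<Longrightarrow> lo \<le> f y" and hi: "\<And>y. y < N \<Longrightarrow> f y \<le> hi"
  shows "\<bar>(Pop ^^ t) f x - piE f\<bar> \<le> var_dist N S x t * (hi - lo)"
proof -
  let ?c = "(lo + hi) / 2"
  have z: "(\<Sum>y<N. Pt t x y - \<pi> y) = 0" by (simp add: sum_subtractf Pt_rowsum x pi_sum)
  have "(Pop ^^ t) f x - piE f = (\<Sum>y<N. (Pt t x y - \<pi> y) * f y)"
    unfolding Pt_Pop[OF x, symmetric] piE_def by (simp add: left_diff_distrib sum_subtractf)
  also have "\<dots> = (\<Sum>y<N. (Pt t x y - \<pi> y) * f y) - ?c * (\<Sum>y<N. Pt t x y - \<pi> y)"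
    using z by simp
  also have "\<dots> = (\<Sum>y<N. (Pt t x y - \<pi> y) * f y) - (\<Sum>y<N. ?c * (Pt t x y - \<pi> y))"
    by (simp only: sum_distrib_left)
  also have "\<dots> = (\<Sum>y<N. (Pt t x y - \<pi> y) * f y - ?c * (Pt t x y - \<pi> y))"
    by (simp only: sum_subtractf)
  also have "\<dots> = (\<Sum>y<N. (Pt t x y - \<pi> y) * (f y - ?c))"
    by (intro sum.cong refl) (simp add: algebra_simps)
  finally have "\<bar>(Pop ^^ t) f x - piE f\<bar> = \<bar>\<Sum>y<N. (Pt t x y - \<pi> y) * (f y - ?c)\<bar>" by simp
  also have "\<dots> \<le> (\<Sum>y<N. \<bar>Pt t x y - \<pi> y\<bar> * ((hi - lo) / 2))"
  proof (rule order.trans[OF sum_abs], rule sum_mono)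
    fix y assume "y \<in> {..<N}"
    then have l1: "lo \<le> f y" and h1: "f y \<le> hi" using lo[of y] hi[of y] by auto
    have "\<bar>f y - ?c\<bar> \<le> (hi - lo) / 2" using l1 h1 by (simp add: abs_le_iff field_simps)
    then show "\<bar>(Pt t x y - \<pi> y) * (f y - ?c)\<bar> \<le> \<bar>Pt t x y - \<pi> y\<bar> * ((hi - lo) / 2)"
      unfolding abs_mult by (intro mult_left_mono) auto
  qed
  also have "\<dots> = (\<Sum>y<N. \<bar>Pt t x y - \<pi> y\<bar>) * ((hi - lo) / 2)"
    by (rule sum_distrib_right[symmetric])
  also have "\<dots> = var_dist N S x t * (hi - lo)"
    unfolding var_dist_eq by simp
  finally show ?thesis .
qed

lemma contraction_iter:
  assumes T: "\<And>x. x < N \<Longrightarrow> var_dist N S x T \<le> 1/4"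
    and h: "\<And>y. y < N \<Longrightarrow> lo \<le> h y \<and> h y \<le> lo + w" and w: "0 \<le> w"
  shows "\<exists>l. \<forall>y<N. l \<le> (Pop ^^ (j * T)) h y \<and> (Pop ^^ (j * T)) h y \<le> l + w / 2 ^ j"
proof (induction j)
  case 0
  then show ?case using h by auto
next
  case (Suc j)
  then obtain l where l: "\<And>y. y < N \<Longrightarrow> l \<le> (Pop ^^ (j * T)) h y \<and> (Pop ^^ (j * T)) h y \<le> l + w / 2 ^ j"
    by blast
  let ?f = "(Pop ^^ (j * T)) h"
  have eq: "(Pop ^^ (Suc j * T)) h = (Pop ^^ T) ?f" by (simp add: funpow_add)
  have b: "\<bar>(Pop ^^ T) ?f y - piE ?f\<bar> \<le> w / 2 ^ j / 4" if y: "y < N" for y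
  proof -
    have "\<bar>(Pop ^^ T) ?f y - piE ?f\<bar> \<le> var_dist N S y T * ((l + w / 2 ^ j) - l)"
      by (rule osc_bound[OF y]) (use l in auto)
    also have "\<dots> \<le> 1/4 * (w / 2 ^ j)"
      using mult_right_mono[OF T[OF y], of "w / 2^j"] w by simp
    finally show ?thesis by simp
  qed
  show ?case
  proof (rule exI[of _ "piE ?f - w / 2 ^ j / 4"], intro allI impI)
    fix y assume y: "y < N"
    show "piE ?f - w / 2 ^ j / 4 \<le> (Pop ^^ (Suc j * T)) h y \<and>
          (Pop ^^ (Suc j * T)) h y \<le> piE ?f - w / 2 ^ j / 4 + w / 2 ^ Suc j"
      using b[OF y] unfolding eq by (auto simp: abs_le_iff field_simps)
  qed
qed

lemma contraction_final:
  assumes hT: "\<And>x. x < N \<Longrightarrow> var_dist N S x T \<le> 1/4"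
    and hh: "\<And>y. y < N \<Longrightarrow> lo \<le> h y \<and> h y \<le> lo + w" and hw: "0 \<le> w" and hy: "y < N"
  shows "\<bar>(Pop ^^ (Suc j * T)) h y - piE h\<bar> \<le> w / 2 ^ j / 4"
proof -
  have "\<exists>l. \<forall>y<N. l \<le> (Pop ^^ (j * T)) h y \<and> (Pop ^^ (j * T)) h y \<le> l + w / 2 ^ j"
    by (rule contraction_iter[OF hT hh hw])
  then obtain l where l: "\<And>y. y < N \<Longrightarrow> l \<le> (Pop ^^ (j * T)) h y \<and> (Pop ^^ (j * T)) h y \<le> l + w / 2 ^ j"
    by blast
  let ?f = "(Pop ^^ (j * T)) h"
  have eq: "(Pop ^^ (Suc j * T)) h = (Pop ^^ T) ?f" by (simp add: funpow_add)
  have "\<bar>(Pop ^^ T) ?f y - piE ?f\<bar> \<le> var_dist N S y T * ((l + w / 2 ^ j) - l)"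
    by (rule osc_bound[OF hy]) (use l in auto)
  also have "\<dots> \<le> 1/4 * (w / 2 ^ j)"
    using mult_right_mono[OF hT[OF hy], of "w / 2^j"] hw by simp
  finally show ?thesis unfolding eq piE_funpow by simp
qed

lemma ip_sym: "ip u v = ip v u"
  unfolding ip_def by (simp add: mult_ac)

lemma self_adjoint: "ip (Pop u) v = ip u (Pop v)"
proof -
  have "ip (Pop u) v = (\<Sum>x<N. \<Sum>y<N. (\<pi> x * P x y) * u y * v x)"
    unfolding ip_def Pop_def by (simp add: sum_distrib_left sum_distrib_right mult_ac)
  also have "\<dots> = (\<Sum>x<N. \<Sum>y<N. (\<pi> y * P y x) * u y * v x)"
    by (intro sum.cong refl) (simp add: reversible)
  also have "\<dots> = (\<Sum>y<N. \<Sum>x<N. (\<pi> y * P y x) * u y * v x)" by (rule sum.swap)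
  also have "\<dots> = ip u (Pop v)"
    unfolding ip_def Pop_def by (simp add: sum_distrib_left sum_distrib_right mult_ac)
  finally show ?thesis .
qed

lemma K_rows: "(\<Sum>x<N. \<Sum>y<N. \<pi> x * P x y * F x) = (\<Sum>x<N. \<pi> x * F x)"
proof (intro sum.cong refl)
  fix x assume x: "x \<in> {..<N}"
  have "(\<Sum>y<N. \<pi> x * P x y * F x) = \<pi> x * F x * (\<Sum>y<N. P x y)"
    by (simp add: sum_distrib_left mult_ac)
  then show "(\<Sum>y<N. \<pi> x * P x y * F x) = \<pi> x * F x" using x by (simp add: P_rowsum)
qed

lemma K_cols: "(\<Sum>x<N. \<Sum>y<N. \<pi> x * P x y * F y) = (\<Sum>y<N. \<pi> y * F y)"
proof -
  have "(\<Sum>x<N. \<Sum>y<N. \<pi> x * P x y * F y) = (\<Sum>y<N. \<Sum>x<N. \<pi> x * P x y * F y)"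
    by (rule sum.swap)
  also have "\<dots> = (\<Sum>y<N. (\<Sum>x<N. \<pi> x * P x y) * F y)" by (simp only: sum_distrib_right)
  also have "\<dots> = (\<Sum>y<N. \<pi> y * F y)" by (intro sum.cong refl) (simp add: stationary)
  finally show ?thesis .
qed

lemma K_mid: "(\<Sum>x<N. \<Sum>y<N. \<pi> x * P x y * (w x * w y)) = ip (Pop w) w"
proof -
  have "ip (Pop w) w = (\<Sum>x<N. (\<Sum>y<N. P x y * w y) * (\<pi> x * w x))"
    unfolding ip_def Pop_def by (intro sum.cong refl) (simp add: mult_ac)
  also have "\<dots> = (\<Sum>x<N. \<Sum>y<N. P x y * w y * (\<pi> x * w x))" by (simp only: sum_distrib_right)
  also have "\<dots> = (\<Sum>x<N. \<Sum>y<N. \<pi> x * P x y * (w x * w y))" by (intro sum.cong refl) (simp add: mult_ac)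
  finally show ?thesis by simp
qed

lemma K_expand:
  "(\<Sum>x<N. \<Sum>y<N. \<pi> x * P x y * (w x + c * w y)^2) = (1 + c^2) * ip w w + 2 * c * ip (Pop w) w"
proof -
  have pt: "\<And>x y. \<pi> x * P x y * (w x + c * w y)^2 = \<pi> x * P x y * (w x * w x) + c^2 * (\<pi> x * P x y * (w y * w y))
      + 2 * c * (\<pi> x * P x y * (w x * w y))"
    by (simp add: power2_eq_square algebra_simps)
  have "(\<Sum>x<N. \<Sum>y<N. \<pi> x * P x y * (w x + c * w y)^2) =
     (\<Sum>x<N. \<Sum>y<N. \<pi> x * P x y * (w x * w x)) + c^2 * (\<Sum>x<N. \<Sum>y<N. \<pi> x * P x y * (w y * w y))
      + 2 * c * (\<Sum>x<N. \<Sum>y<N. \<pi> x * P x y * (w x * w y))"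
    by (simp only: pt sum.distrib sum_distrib_left)
  also have "(\<Sum>x<N. \<Sum>y<N. \<pi> x * P x y * (w x * w x)) = ip w w"
    unfolding K_rows ip_def by (simp add: mult.assoc)
  also have "(\<Sum>x<N. \<Sum>y<N. \<pi> x * P x y * (w y * w y)) = ip w w"
    unfolding K_cols ip_def by (simp add: mult.assoc)
  also have "(\<Sum>x<N. \<Sum>y<N. \<pi> x * P x y * (w x * w y)) = ip (Pop w) w" by (rule K_mid)
  finally show ?thesis by (simp add: algebra_simps)
qed

lemma lazy_pos: "0 \<le> ip (Pop w) w"
proof -
  have "(\<Sum>x<N. \<pi> x * P x x * (w x + w x)^2) \<le> (\<Sum>x<N. \<Sum>y<N. \<pi> x * P x y * (w x + w y)^2)"
    by (intro sum_mono member_le_sum) (auto intro!: mult_nonneg_nonneg pi_nonneg P_nonneg)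
  moreover have "(\<Sum>x<N. \<pi> x * P x x * (w x + w x)^2) = (\<Sum>x<N. 2 * (\<pi> x * w x * w x))"
    by (intro sum.cong refl) (simp add: P_diag power2_eq_square algebra_simps)
  moreover have "(\<Sum>x<N. 2 * (\<pi> x * w x * w x)) = 2 * ip w w"
    unfolding ip_def by (simp only: sum_distrib_left)
  moreover have "(\<Sum>x<N. \<Sum>y<N. \<pi> x * P x y * (w x + w y)^2) = 2 * ip w w + 2 * ip (Pop w) w"
    using K_expand[of w 1] by simp
  ultimately show ?thesis by simp
qed

lemma energy_eq: "ip h h - ip (Pop h) h = (1/2) * (\<Sum>x<N. \<Sum>y<N. \<pi> x * P x y * (h x - h y)^2)"
proof -
  have "(\<Sum>x<N. \<Sum>y<N. \<pi> x * P x y * (h x - h y)^2) = (\<Sum>x<N. \<Sum>y<N. \<pi> x * P x y * (h x + (-1) * h y)^2)"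
    by simp
  also have "\<dots> = 2 * ip h h - 2 * ip (Pop h) h" using K_expand[of h "-1"] by simp
  finally show ?thesis by simp
qed

lemma ip_nonneg: "0 \<le> ip u u"
  unfolding ip_def by (intro sum_nonneg) (simp add: pi_nonneg mult.assoc)

lemma Pop_diff_fun: "Pop (\<lambda>y. u y - v y) = (\<lambda>x. Pop u x - Pop v x)"
  by (rule ext) (rule Pop_diff)

lemma ip_diff_left: "ip (\<lambda>x. u x - v x) w = ip u w - ip v w"
  unfolding ip_def by (simp add: algebra_simps sum_subtractf)

lemma ip_diff_right: "ip w (\<lambda>x. u x - v x) = ip w u - ip w v"
  unfolding ip_def by (simp add: algebra_simps sum_subtractf)

definition aseq :: "(nat \<Rightarrow> real) \<Rightarrow> nat \<Rightarrow> real" where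
  "aseq h n = (let u = (Pop ^^ (n div 2)) h in if even n then ip u u else ip (Pop u) u)"

lemma aseq_even: "aseq h (2 * i) = ip ((Pop ^^ i) h) ((Pop ^^ i) h)"
  unfolding aseq_def by (simp add: Let_def)

lemma aseq_odd: "aseq h (2 * i + 1) = ip (Pop ((Pop ^^ i) h)) ((Pop ^^ i) h)"
  unfolding aseq_def by (simp add: Let_def)

lemma aseq_even2: "aseq h (2 * i + 2) = ip (Pop ((Pop ^^ i) h)) (Pop ((Pop ^^ i) h))"
proof -
  have e: "2 * i + 2 = 2 * Suc i" by simp
  show ?thesis unfolding e aseq_even by simp
qed

lemma aseq_odd2: "aseq h (2 * i + 3) = ip (Pop (Pop ((Pop ^^ i) h))) (Pop ((Pop ^^ i) h))"
proof -
  have e: "2 * i + 3 = 2 * Suc i + 1" by simp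
  show ?thesis unfolding e aseq_odd by simp
qed

lemma dseq_mono: "aseq h (Suc n) - aseq h (Suc (Suc n)) \<le> aseq h n - aseq h (Suc n)"
proof (cases "even n")
  case True
  then obtain i where n: "n = 2 * i" by blast
  define u where "u = (Pop ^^ i) h"
  define w where "w = (\<lambda>x. u x - Pop u x)"
  have "0 \<le> ip w w" by (rule ip_nonneg)
  moreover have "ip w w = ip u u - ip (Pop u) u - ip u (Pop u) + ip (Pop u) (Pop u)"
    unfolding w_def ip_diff_left ip_diff_right by simp
  moreover have "ip u (Pop u) = ip (Pop u) u" by (rule ip_sym)
  moreover have "Suc n = 2 * i + 1" "Suc (Suc n) = 2 * i + 2" using n by simp_all
  ultimately show ?thesis using n aseq_even[of h i] aseq_odd[of h i] aseq_even2[of h i]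
    unfolding u_def by simp
next
  case False
  then obtain i where n: "n = 2 * i + 1" by (metis oddE)
  define u where "u = (Pop ^^ i) h"
  define w where "w = (\<lambda>x. u x - Pop u x)"
  have "0 \<le> ip (Pop w) w" by (rule lazy_pos)
  moreover have "Pop w = (\<lambda>x. Pop u x - Pop (Pop u) x)" unfolding w_def by (rule Pop_diff_fun)
  moreover have "ip (\<lambda>x. Pop u x - Pop (Pop u) x) w =
      ip (Pop u) u - ip (Pop u) (Pop u) - ip (Pop (Pop u)) u + ip (Pop (Pop u)) (Pop u)"
    unfolding w_def ip_diff_left ip_diff_right by simp
  moreover have "ip (Pop (Pop u)) u = ip (Pop u) (Pop u)" by (rule self_adjoint)
  moreover have "Suc n = 2 * i + 2" "Suc (Suc n) = 2 * i + 3" using n by simp_all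
  moreover have "aseq h (Suc (Suc (Suc (2 * i)))) = ip (Pop (Pop u)) (Pop u)"
    using aseq_odd2[of h i] unfolding u_def by (simp add: numeral_3_eq_3)
  ultimately show ?thesis using n aseq_odd[of h i] aseq_even2[of h i]
    unfolding u_def by simp
qed

lemma dseq_le0: "aseq h n - aseq h (Suc n) \<le> aseq h 0 - aseq h 1"
proof (induction n)
  case 0 then show ?case by simp
next
  case (Suc n) then show ?case using dseq_mono[of h n] by simp
qed

lemma aseq_lower: "aseq h 0 - real n * (aseq h 0 - aseq h 1) \<le> aseq h n"
proof (induction n)
  case 0 then show ?case by simp
next
  case (Suc n) then show ?case using dseq_le0[of h n] by (simp add: algebra_simps)
qed

lemma aseq_0: "aseq h 0 = ip h h" unfolding aseq_def by simp
lemma aseq_1: "aseq h 1 = ip (Pop h) h" unfolding aseq_def by simp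

theorem mixing_lower_abstract:
  fixes g :: "nat \<Rightarrow> real" and k :: nat
  assumes g: "\<And>y. y < N \<Longrightarrow> \<bar>g y\<bar> \<le> 1" and k: "1 \<le> k"
  defines "h \<equiv> (\<lambda>y. g y - piE g)"
  defines "E \<equiv> (1/2) * (\<Sum>x<N. \<Sum>y<N. \<pi> x * P x y * (g x - g y)^2)"
  shows "ip h h - 2 * real k * real (mixing_time N S) * E \<le> (1/4) ^ k"
proof -
  define T where "T = mixing_time N S"
  have hT: "\<And>x. x < N \<Longrightarrow> var_dist N S x T \<le> 1/4" unfolding T_def by (rule mixing_time_prop)
  have piEh: "piE h = 0"
  proof -
    have "piE h = (\<Sum>y<N. \<pi> y * g y) - (\<Sum>y<N. \<pi> y * piE g)"
      unfolding piE_def h_def by (simp add: right_diff_distrib sum_subtractf)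
    also have "(\<Sum>y<N. \<pi> y * piE g) = piE g" by (simp add: sum_distrib_right[symmetric] pi_sum)
    also have "(\<Sum>y<N. \<pi> y * g y) = piE g" by (simp add: piE_def)
    finally show ?thesis by simp
  qed
  have hb: "\<And>y. y < N \<Longrightarrow> (-1 - piE g) \<le> h y \<and> h y \<le> (-1 - piE g) + 2"
    using g unfolding h_def by (auto simp: abs_le_iff)
  obtain j where j: "k = Suc j" using k by (cases k) auto
  define u where "u = (Pop ^^ (k * T)) h"
  have e2: "2 / 2 ^ j / 4 = (1/2::real) ^ k" unfolding j by (simp add: power_divide)
  have ub: "\<bar>u y\<bar> \<le> (1/2) ^ k" if y: "y < N" for y
  proof -
    have w0: "(0::real) \<le> 2" by simp
    have "\<bar>(Pop ^^ (Suc j * T)) h y - piE h\<bar> \<le> 2 / 2 ^ j / 4"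
      by (rule contraction_final[OF hT hb w0 y])
    then show ?thesis unfolding u_def j piEh using e2 j by simp
  qed
  have sq: "\<pi> x * u x * u x \<le> \<pi> x * ((1/2)^k)^2" if x: "x < N" for x
  proof -
    have "\<bar>u x\<bar> ^ 2 \<le> ((1/2)^k)^2" by (rule power_mono[OF ub[OF x]]) simp
    then have "u x * u x \<le> ((1/2)^k)^2" by (simp add: power2_eq_square)
    then show ?thesis using pi_nonneg[of x] by (simp add: mult.assoc mult_left_mono)
  qed
  have "aseq h (2 * (k * T)) = ip u u" unfolding u_def by (rule aseq_even)
  also have "\<dots> \<le> (\<Sum>x<N. \<pi> x * ((1/2)^k)^2)"
    unfolding ip_def by (rule sum_mono) (use sq in simp)
  also have "\<dots> = ((1/2)^k)^2" by (simp only: sum_distrib_right[symmetric] pi_sum mult_1)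
  also have "((1/2::real)^k)^2 = ((1/2)^2)^k" by (simp only: power_mult[symmetric] mult.commute)
  also have "((1/2::real)^2) = 1/4" by (simp add: power2_eq_square)
  finally have up: "aseq h (2 * (k * T)) \<le> (1/4)^k" .
  have low: "aseq h 0 - real (2 * (k * T)) * (aseq h 0 - aseq h 1) \<le> aseq h (2 * (k * T))"
    by (rule aseq_lower)
  have dE: "aseq h 0 - aseq h 1 = E"
  proof -
    have "aseq h 0 - aseq h 1 = (1/2) * (\<Sum>x<N. \<Sum>y<N. \<pi> x * P x y * (h x - h y)^2)"
      unfolding aseq_0 aseq_1 by (rule energy_eq)
    also have "\<dots> = E" unfolding E_def h_def by simp
    finally show ?thesis .
  qed
  have "ip h h - 2 * real k * real T * E = aseq h 0 - real (2 * (k * T)) * E"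
    by (simp add: aseq_0)
  then show ?thesis using low[unfolded dE] up unfolding T_def by linarith
qed

end


definition Lw :: "nat \<Rightarrow> nat" where "Lw N = N div 8"

definition good :: "nat \<Rightarrow> (nat \<times> nat) set \<Rightarrow> nat \<Rightarrow> bool" where
  "good N S k \<longleftrightarrow> (\<forall>x y. (x, y) \<in> S \<longrightarrow> cdist N x y \<noteq> 1 \<longrightarrow> x \<le> k \<longrightarrow> k < y \<longrightarrow>
      x < Lw N \<and> 6 * Lw N \<le> y)"

definition G1 :: "nat \<Rightarrow> (nat \<times> nat) set \<Rightarrow> nat set" where
  "G1 N S = {k \<in> {Lw N..<2 * Lw N}. good N S k}"

definition G2 :: "nat \<Rightarrow> (nat \<times> nat) set \<Rightarrow> nat set" where
  "G2 N S = {k \<in> {5 * Lw N..<6 * Lw N}. good N S k}"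

definition cnt :: "nat set \<Rightarrow> nat \<Rightarrow> real" where
  "cnt G x = real (card {k \<in> G. k < x})"

definition gfun :: "nat \<Rightarrow> (nat \<times> nat) set \<Rightarrow> nat \<Rightarrow> real" where
  "gfun N S x = -1 + 2 * cnt (G1 N S) x / real (card (G1 N S))
                    - 2 * cnt (G2 N S) x / real (card (G2 N S))"

lemma finite_G1: "finite (G1 N S)" unfolding G1_def by auto
lemma finite_G2: "finite (G2 N S)" unfolding G2_def by auto

lemma cnt_split:
  assumes "finite G" "a \<le> b"
  shows "cnt G b = cnt G a + real (card {k \<in> G. a \<le> k \<and> k < b})"
proof -
  have "{k \<in> G. k < b} = {k \<in> G. k < a} \<union> {k \<in> G. a \<le> k \<and> k < b}" using assms by auto
  moreover have "card ({k \<in> G. k < a} \<union> {k \<in> G. a \<le> k \<and> k < b}) =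
      card {k \<in> G. k < a} + card {k \<in> G. a \<le> k \<and> k < b}"
    by (rule card_Un_disjoint) (use assms in auto)
  ultimately show ?thesis unfolding cnt_def by simp
qed

lemma cnt_Suc:
  assumes "finite G"
  shows "cnt G (Suc x) = cnt G x + of_bool (x \<in> G)"
proof -
  have "cnt G (Suc x) = cnt G x + real (card {k \<in> G. x \<le> k \<and> k < Suc x})"
    by (rule cnt_split) (use assms in auto)
  moreover have "{k \<in> G. x \<le> k \<and> k < Suc x} = {k \<in> G. k = x}" by (auto simp: less_Suc_eq_le)
  moreover have "{k \<in> G. k = x} = (if x \<in> G then {x} else {})" by auto
  ultimately show ?thesis by simp
qed

lemma cnt_le: "finite G \<Longrightarrow> cnt G x \<le> real (card G)"
  unfolding cnt_def by (auto intro: card_mono)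

lemma cnt_nonneg: "0 \<le> cnt G x" unfolding cnt_def by simp

lemma cnt_zero: "finite G \<Longrightarrow> (\<And>k. k \<in> G \<Longrightarrow> x \<le> k) \<Longrightarrow> cnt G x = 0"
  unfolding cnt_def by (subgoal_tac "{k \<in> G. k < x} = {}") (auto simp: not_less[symmetric])

lemma cnt_full: "finite G \<Longrightarrow> (\<And>k. k \<in> G \<Longrightarrow> k < x) \<Longrightarrow> cnt G x = real (card G)"
  unfolding cnt_def by (subgoal_tac "{k \<in> G. k < x} = G") auto

lemma cdist_one:
  assumes "x < N" "y < N" "cdist N x y = 1"
  shows "y = x + 1 \<or> x = y + 1 \<or> (x = 0 \<and> y = N - 1) \<or> (x = N - 1 \<and> y = 0)"
  using assms unfolding cdist_def by (auto split: if_splits simp: min_def)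

locale gsetup =
  fixes N :: nat and S :: "(nat \<times> nat) set"
  assumes N16: "16 \<le> N" and Ssub: "S \<subseteq> vpairs N"
    and k1pos: "0 < card (G1 N S)" and k2pos: "0 < card (G2 N S)"
begin

abbreviation "L \<equiv> Lw N"
abbreviation "k1 \<equiv> real (card (G1 N S))"
abbreviation "k2 \<equiv> real (card (G2 N S))"
abbreviation "g \<equiv> gfun N S"

lemma L2: "2 \<le> L" unfolding Lw_def using N16 by simp
lemma L6: "6 * L < N" unfolding Lw_def using N16 by simp
lemma L16: "real N / 16 \<le> real L"
proof -
  have "N \<le> 16 * (N div 8)" using N16 by simp
  then show ?thesis unfolding Lw_def by linarith
qed

lemma G1_range: "k \<in> G1 N S \<Longrightarrow> L \<le> k \<and> k < 2 * L" unfolding G1_def by auto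
lemma G2_range: "k \<in> G2 N S \<Longrightarrow> 5 * L \<le> k \<and> k < 6 * L" unfolding G2_def by auto
lemma G_disj: "k \<in> G1 N S \<Longrightarrow> k \<notin> G2 N S" using G1_range G2_range by force

lemma g_low: "x \<le> L \<Longrightarrow> g x = -1"
  unfolding gfun_def using G1_range G2_range
  by (subst cnt_zero[OF finite_G1], force, subst cnt_zero[OF finite_G2], force, simp)

lemma g_mid: "2 * L \<le> x \<Longrightarrow> x \<le> 5 * L \<Longrightarrow> g x = 1"
  unfolding gfun_def using G1_range G2_range k1pos
  by (subst cnt_full[OF finite_G1], force, subst cnt_zero[OF finite_G2], force, simp)

lemma g_high: "6 * L \<le> x \<Longrightarrow> g x = -1"
  unfolding gfun_def using G1_range G2_range k1pos k2pos
  by (subst cnt_full[OF finite_G1], force, subst cnt_full[OF finite_G2], force, simp)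

lemma g_bound: "\<bar>g x\<bar> \<le> 1"
proof (cases "x \<le> 5 * L")
  case True
  then have "cnt (G2 N S) x = 0" using G2_range by (intro cnt_zero[OF finite_G2]) force
  moreover have "0 \<le> cnt (G1 N S) x / k1" "cnt (G1 N S) x / k1 \<le> 1"
    using cnt_le[OF finite_G1, of N S x] cnt_nonneg k1pos by (auto simp: divide_simps)
  ultimately show ?thesis unfolding gfun_def by (auto simp: abs_le_iff)
next
  case False
  then have "cnt (G1 N S) x = k1" using G1_range by (intro cnt_full[OF finite_G1]) force
  moreover have "0 \<le> cnt (G2 N S) x / k2" "cnt (G2 N S) x / k2 \<le> 1"
    using cnt_le[OF finite_G2, of N S x] cnt_nonneg k2pos by (auto simp: divide_simps)
  ultimately show ?thesis unfolding gfun_def using k1pos by (auto simp: abs_le_iff)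
qed

lemma g_chord:
  assumes ab: "(a, b) \<in> S" and c: "cdist N a b \<noteq> 1"
  shows "g a = g b"
proof -
  have a_b: "a < b" "b < N" using ab Ssub unfolding vpairs_def by auto
  show ?thesis
  proof (cases "\<exists>k. (k \<in> G1 N S \<or> k \<in> G2 N S) \<and> a \<le> k \<and> k < b")
    case True
    then obtain k where k: "k \<in> G1 N S \<or> k \<in> G2 N S" "a \<le> k" "k < b" by blast
    have "good N S k" using k(1) unfolding G1_def G2_def by auto
    then have ab2: "a < L" "6 * L \<le> b" using ab c k unfolding good_def by auto
    show ?thesis using g_low[of a] g_high[of b] ab2 by simp
  next
    case False
    have e1: "{k \<in> G1 N S. a \<le> k \<and> k < b} = {}" using False by auto
    have e2: "{k \<in> G2 N S. a \<le> k \<and> k < b} = {}" using False by auto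
    have "cnt (G1 N S) b = cnt (G1 N S) a" using cnt_split[OF finite_G1, of a b] e1 a_b by simp
    moreover have "cnt (G2 N S) b = cnt (G2 N S) a" using cnt_split[OF finite_G2, of a b] e2 a_b by simp
    ultimately show ?thesis unfolding gfun_def by simp
  qed
qed

definition Dk :: "nat \<Rightarrow> real" where
  "Dk k = 4 * of_bool (k \<in> G1 N S) / k1^2 + 4 * of_bool (k \<in> G2 N S) / k2^2"

lemma g_succ: "(g (Suc x) - g x)^2 = Dk x"
proof -
  have nz: "k1 \<noteq> 0" "k2 \<noteq> 0" using k1pos k2pos by auto
  have "g (Suc x) - g x = 2 * of_bool (x \<in> G1 N S) / k1 - 2 * of_bool (x \<in> G2 N S) / k2"
    unfolding gfun_def cnt_Suc[OF finite_G1] cnt_Suc[OF finite_G2] using nz by (simp add: field_simps)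
  then have "(g (Suc x) - g x)^2 = (2 * of_bool (x \<in> G1 N S) / k1 - 2 * of_bool (x \<in> G2 N S) / k2)^2"
    by simp
  then show ?thesis unfolding Dk_def using G_disj[of x]
    by (cases "x \<in> G1 N S"; cases "x \<in> G2 N S") (simp_all add: power_divide)
qed

lemma Dk_nonneg: "0 \<le> Dk k" unfolding Dk_def by simp

lemma g_adj_bound:
  assumes "adj N S x y"
  shows "(g x - g y)^2 \<le> of_bool (y = Suc x) * Dk x + of_bool (x = Suc y) * Dk y"
proof -
  have xy: "x < N" "y < N" "x \<noteq> y" using assms unfolding adj_def by auto
  consider (c) "cdist N x y = 1" | (s) "cdist N x y \<noteq> 1" "(min x y, max x y) \<in> S"
    using assms unfolding adj_def by auto
  then show ?thesis
  proof cases
    case c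
    then consider "y = x + 1" | "x = y + 1" | "x = 0 \<and> y = N - 1" | "x = N - 1 \<and> y = 0"
      using cdist_one[OF xy(1,2)] by blast
    then show ?thesis
    proof cases
      case 1 then show ?thesis using g_succ[of x] Dk_nonneg[of y] by (simp add: power2_commute)
    next
      case 2 then show ?thesis using g_succ[of y] Dk_nonneg[of x] by simp
    next
      case 3
      then have "g x = -1" "g y = -1" using g_low[of x] g_high[of y] L6 by auto
      then show ?thesis using Dk_nonneg by (simp add: add_nonneg_nonneg)
    next
      case 4
      then have "g y = -1" "g x = -1" using g_low[of y] g_high[of x] L6 by auto
      then show ?thesis using Dk_nonneg by (simp add: add_nonneg_nonneg)
    qed
  next
    case s
    have "cdist N (min x y) (max x y) \<noteq> 1" using s(1) by (cases "x \<le> y") (auto simp: cdist_sym min_def max_def)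
    then have "g (min x y) = g (max x y)" using g_chord[OF s(2)] by simp
    then have "g x = g y" by (cases "x \<le> y") (auto simp: min_def max_def)
    then show ?thesis using Dk_nonneg by (simp add: add_nonneg_nonneg)
  qed
qed

lemma sum_Dk: "(\<Sum>x<N. Dk x) \<le> 4 / k1 + 4 / k2"
proof -
  have "(\<Sum>x<N. Dk x) = 4 * real (card ({..<N} \<inter> G1 N S)) / k1^2 + 4 * real (card ({..<N} \<inter> G2 N S)) / k2^2"
    unfolding Dk_def by (simp add: sum.distrib sum_divide_distrib[symmetric] sum_distrib_left[symmetric])
  also have "\<dots> \<le> 4 * k1 / k1^2 + 4 * k2 / k2^2"
    by (intro add_mono divide_right_mono mult_left_mono) (auto simp: card_mono finite_G1 finite_G2)
  also have "\<dots> = 4 / k1 + 4 / k2" using k1pos k2pos by (simp add: power2_eq_square)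
  finally show ?thesis .
qed

lemma energy_sum: "(\<Sum>x<N. \<Sum>y<N. of_bool (adj N S x y) * (g x - g y)^2) \<le> 8 / k1 + 8 / k2"
proof -
  have "(\<Sum>x<N. \<Sum>y<N. of_bool (adj N S x y) * (g x - g y)^2) \<le>
      (\<Sum>x<N. \<Sum>y<N. of_bool (y = Suc x) * Dk x + of_bool (x = Suc y) * Dk y)"
    by (intro sum_mono) (auto simp: g_adj_bound Dk_nonneg)
  also have "\<dots> = (\<Sum>x<N. \<Sum>y<N. of_bool (y = Suc x) * Dk x) + (\<Sum>x<N. \<Sum>y<N. of_bool (x = Suc y) * Dk y)"
    by (simp add: sum.distrib)
  also have "(\<Sum>x<N. \<Sum>y<N. of_bool (y = Suc x) * Dk x) \<le> (\<Sum>x<N. Dk x)"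
  proof (intro sum_mono)
    fix x assume "x \<in> {..<N}"
    have "(\<Sum>y<N. of_bool (y = Suc x) * Dk x) = real (card ({..<N} \<inter> {y. y = Suc x})) * Dk x"
      by (simp add: sum_distrib_right[symmetric])
    also have "\<dots> \<le> 1 * Dk x"
    proof (rule mult_right_mono)
      have "{..<N} \<inter> {y. y = Suc x} \<subseteq> {Suc x}" by auto
      then have "card ({..<N} \<inter> {y. y = Suc x}) \<le> 1" using card_mono[of "{Suc x}"] by fastforce
      then show "real (card ({..<N} \<inter> {y. y = Suc x})) \<le> 1" by simp
    qed (rule Dk_nonneg)
    finally show "(\<Sum>y<N. of_bool (y = Suc x) * Dk x) \<le> Dk x" by simp
  qed
  also have "(\<Sum>x<N. \<Sum>y<N. of_bool (x = Suc y) * Dk y) \<le> (\<Sum>x<N. Dk x)"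
  proof -
    have "(\<Sum>x<N. \<Sum>y<N. of_bool (x = Suc y) * Dk y) = (\<Sum>y<N. \<Sum>x<N. of_bool (x = Suc y) * Dk y)"
      by (rule sum.swap)
    also have "\<dots> \<le> (\<Sum>y<N. Dk y)"
    proof (intro sum_mono)
      fix y assume "y \<in> {..<N}"
      have "(\<Sum>x<N. of_bool (x = Suc y) * Dk y) = real (card ({..<N} \<inter> {x. x = Suc y})) * Dk y"
        by (simp add: sum_distrib_right[symmetric])
      also have "\<dots> \<le> 1 * Dk y"
      proof (rule mult_right_mono)
        have "{..<N} \<inter> {x. x = Suc y} \<subseteq> {Suc y}" by auto
        then have "card ({..<N} \<inter> {x. x = Suc y}) \<le> 1" using card_mono[of "{Suc y}"] by fastforce
        then show "real (card ({..<N} \<inter> {x. x = Suc y})) \<le> 1" by simp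
      qed (rule Dk_nonneg)
      finally show "(\<Sum>x<N. of_bool (x = Suc y) * Dk y) \<le> Dk y" by simp
    qed
    finally show ?thesis .
  qed
  finally show ?thesis using sum_Dk by simp
qed

end


lemma aux84: "(8 / a + 8 / b) / (4 * d) = (2 / a + 2 / b) / (d::real)"
proof -
  have e: "8 / a + 8 / b = 4 * (2 / a + 2 / b)" by simp
  show ?thesis unfolding e by (rule mult_divide_mult_cancel_left) simp
qed

context gsetup
begin

lemma N3: "3 \<le> N" using N16 by simp

sublocale chain N S by unfold_locales (rule N3)

lemma E_explicit:
  "(1/2) * (\<Sum>x<N. \<Sum>y<N. \<pi> x * P x y * (g x - g y)^2)
    = (1 / (4 * real D)) * (\<Sum>x<N. \<Sum>y<N. of_bool (adj N S x y) * (g x - g y)^2)"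
proof -
  have "(\<Sum>x<N. \<Sum>y<N. \<pi> x * P x y * (g x - g y)^2)
      = (\<Sum>x<N. \<Sum>y<N. (1 / (2 * real D)) * (of_bool (adj N S x y) * (g x - g y)^2))"
  proof (intro sum.cong refl)
    fix x y assume x: "x \<in> {..<N}"
    show "\<pi> x * P x y * (g x - g y)^2 = (1 / (2 * real D)) * (of_bool (adj N S x y) * (g x - g y)^2)"
    proof (cases "x = y")
      case True then show ?thesis by simp
    next
      case False
      then show ?thesis using pi_P_adj[OF False] x by simp
    qed
  qed
  also have "\<dots> = (1 / (2 * real D)) * (\<Sum>x<N. \<Sum>y<N. of_bool (adj N S x y) * (g x - g y)^2)"
    by (simp only: sum_distrib_left)
  finally show ?thesis by simp
qed

lemma E_bound:
  "(1/2) * (\<Sum>x<N. \<Sum>y<N. \<pi> x * P x y * (g x - g y)^2) \<le> (2 / k1 + 2 / k2) / real N"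
proof -
  have "(1 / (4 * real D)) * (\<Sum>x<N. \<Sum>y<N. of_bool (adj N S x y) * (g x - g y)^2)
      \<le> (1 / (4 * real D)) * (8 / k1 + 8 / k2)"
    by (intro mult_left_mono energy_sum) (use D_pos in simp)
  also have "\<dots> = (2 / k1 + 2 / k2) / real D"
    using aux84[of k1 k2 "real D"] by simp
  also have "\<dots> \<le> (2 / k1 + 2 / k2) / real N"
    using D_ge N3 k1pos k2pos by (intro divide_left_mono) auto
  finally show ?thesis using E_explicit by simp
qed

lemma deg_bound: "deg N S x \<le> 4 + card {y. (x, y) \<in> S} + card {y. (y, x) \<in> S}"
proof -
  have fin1: "finite {y. (x, y) \<in> S}"
    by (rule finite_subset[of _ "{..<N}"]) (use Ssub in \<open>auto simp: vpairs_def\<close>)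
  have fin2: "finite {y. (y, x) \<in> S}"
    by (rule finite_subset[of _ "{..<N}"]) (use Ssub in \<open>auto simp: vpairs_def\<close>)
  have sub: "{y. y < N \<and> adj N S x y} \<subseteq> {x + 1, x - 1, 0, N - 1} \<union> {y. (x, y) \<in> S} \<union> {y. (y, x) \<in> S}"
  proof
    fix y assume y: "y \<in> {y. y < N \<and> adj N S x y}"
    then have a: "adj N S x y" "y < N" by auto
    then have "x < N" "x \<noteq> y" unfolding adj_def by auto
    show "y \<in> {x + 1, x - 1, 0, N - 1} \<union> {y. (x, y) \<in> S} \<union> {y. (y, x) \<in> S}"
    proof (cases "cdist N x y = 1")
      case True
      then show ?thesis using cdist_one[OF \<open>x < N\<close> \<open>y < N\<close>] by auto
    next
      case False
      then have "(min x y, max x y) \<in> S" using a unfolding adj_def by auto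
      then show ?thesis by (cases "x \<le> y") (auto simp: min_def max_def)
    qed
  qed
  have "deg N S x \<le> card ({x + 1, x - 1, 0, N - 1} \<union> {y. (x, y) \<in> S} \<union> {y. (y, x) \<in> S})"
    unfolding deg_def by (rule card_mono) (use fin1 fin2 sub in auto)
  also have "\<dots> \<le> card {x + 1, x - 1, 0, N - 1} + card {y. (x, y) \<in> S} + card {y. (y, x) \<in> S}"
    by (rule order.trans[OF card_Un_le add_right_mono[OF card_Un_le]])
  also have "card {x + 1, x - 1, 0, N - 1} \<le> 4" using card_length[of "[x + 1, x - 1, 0, N - 1]"] by simp
  finally show ?thesis by simp
qed

lemma finS1: "finite {y. (x, y) \<in> S}"
  by (rule finite_subset[of _ "{..<N}"]) (use Ssub in \<open>auto simp: vpairs_def\<close>)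

lemma finS2: "finite {y. (y, x) \<in> S}"
proof (rule finite_subset[of _ "{..<N}"])
  show "{y. (y, x) \<in> S} \<subseteq> {..<N}"
  proof
    fix y assume "y \<in> {y. (y, x) \<in> S}"
    then have "(y, x) \<in> vpairs N" using Ssub by auto
    then show "y \<in> {..<N}" unfolding vpairs_def by auto
  qed
qed simp

lemma card_fst_sum: "(\<Sum>x<N. card {y. (x, y) \<in> S}) = card S"
proof -
  have "S = (SIGMA x:{..<N}. {y. (x, y) \<in> S})" using Ssub unfolding vpairs_def by auto
  moreover have "card (SIGMA x:{..<N}. {y. (x, y) \<in> S}) = (\<Sum>x<N. card {y. (x, y) \<in> S})"
    by (rule card_SigmaI) (auto simp: finS1)
  ultimately show ?thesis by simp
qed

lemma card_snd_sum: "(\<Sum>x<N. card {y. (y, x) \<in> S}) = card S"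
proof -
  let ?S' = "prod.swap ` S"
  have "?S' = (SIGMA x:{..<N}. {y. (y, x) \<in> S})" using Ssub unfolding vpairs_def by force
  moreover have "card (SIGMA x:{..<N}. {y. (y, x) \<in> S}) = (\<Sum>x<N. card {y. (y, x) \<in> S})"
    by (rule card_SigmaI) (auto simp: finS2)
  moreover have "card ?S' = card S" by (intro card_image inj_onI) (metis swap_swap)
  ultimately show ?thesis by simp
qed

lemma D_upper: "real D \<le> 4 * real N + 2 * real (card S)"
proof -
  have "D \<le> (\<Sum>x<N. 4 + card {y. (x, y) \<in> S} + card {y. (y, x) \<in> S})"
    by (intro sum_mono deg_bound)
  also have "\<dots> = 4 * N + card S + card S"
    by (simp add: sum.distrib card_fst_sum card_snd_sum)
  finally have "D \<le> 4 * N + 2 * card S" by simp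
  then have "real D \<le> real (4 * N + 2 * card S)" by (simp only: of_nat_le_iff)
  then show ?thesis by simp
qed

lemma pi_lower_set:
  assumes "A \<subseteq> {..<N}"
  shows "real (card A) / real D \<le> (\<Sum>x\<in>A. \<pi> x)"
proof -
  have fin: "finite A" using assms finite_subset by blast
  have "real (card A) / real D = (\<Sum>x\<in>A. 1 / real D)" by simp
  also have "\<dots> \<le> (\<Sum>x\<in>A. \<pi> x)"
  proof (rule sum_mono)
    fix x assume "x \<in> A"
    then have "x < N" using assms by auto
    then show "1 / real D \<le> \<pi> x" unfolding pi_def' using deg_pos[of x] D_pos
      by (intro divide_right_mono) auto
  qed
  finally show ?thesis .
qed

lemma V_lower:
  "2 * real L / real D \<le> ip (\<lambda>y. g y - piE g) (\<lambda>y. g y - piE g)"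
proof -
  define m where "m = piE g"
  define Ap where "Ap = {2 * L..5 * L}"
  define Am where "Am = {..L}"
  have ApN: "Ap \<subseteq> {..<N}" unfolding Ap_def using L6 by auto
  have AmN: "Am \<subseteq> {..<N}" unfolding Am_def using L6 by auto
  have disj: "Ap \<inter> Am = {}" unfolding Ap_def Am_def using L2 by auto
  let ?f = "\<lambda>x. \<pi> x * (g x - m) * (g x - m)"
  have fnn: "\<And>x. 0 \<le> ?f x" using pi_nonneg by (simp add: mult.assoc)
  define a where "a = (\<Sum>x\<in>Ap. \<pi> x)"
  define b where "b = (\<Sum>x\<in>Am. \<pi> x)"
  have a0: "real (L + 1) / real D \<le> a"
  proof -
    have "card Ap = 3 * L + 1" unfolding Ap_def by simp
    then have "real (L + 1) / real D \<le> real (card Ap) / real D"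
      using D_pos by (intro divide_right_mono) auto
    then show ?thesis unfolding a_def using pi_lower_set[OF ApN] by linarith
  qed
  have b0: "real (L + 1) / real D \<le> b"
  proof -
    have "card Am = L + 1" unfolding Am_def by simp
    then show ?thesis unfolding b_def using pi_lower_set[OF AmN] by simp
  qed
  have "(\<Sum>x\<in>Ap \<union> Am. ?f x) \<le> (\<Sum>x<N. ?f x)"
    by (rule sum_mono2) (use ApN AmN fnn in auto)
  moreover have "(\<Sum>x\<in>Ap \<union> Am. ?f x) = (\<Sum>x\<in>Ap. ?f x) + (\<Sum>x\<in>Am. ?f x)"
    by (rule sum.union_disjoint) (use disj in \<open>auto simp: Ap_def Am_def\<close>)
  moreover have "(\<Sum>x\<in>Ap. ?f x) = a * (1 - m)^2"
  proof -
    have "(\<Sum>x\<in>Ap. ?f x) = (\<Sum>x\<in>Ap. \<pi> x * (1 - m)^2)"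
      by (intro sum.cong refl) (auto simp: Ap_def g_mid power2_eq_square)
    then show ?thesis unfolding a_def by (simp add: sum_distrib_right)
  qed
  moreover have "(\<Sum>x\<in>Am. ?f x) = b * (1 + m)^2"
  proof -
    have "(\<Sum>x\<in>Am. ?f x) = (\<Sum>x\<in>Am. \<pi> x * (1 + m)^2)"
      by (intro sum.cong refl) (auto simp: Am_def g_low power2_eq_square algebra_simps)
    then show ?thesis unfolding b_def by (simp add: sum_distrib_right)
  qed
  ultimately have ip: "a * (1 - m)^2 + b * (1 + m)^2 \<le> ip (\<lambda>y. g y - m) (\<lambda>y. g y - m)"
    unfolding ip_def by linarith
  define c where "c = real (L + 1) / real D"
  have "c * (1 - m)^2 + c * (1 + m)^2 \<le> a * (1 - m)^2 + b * (1 + m)^2"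
    using a0 b0 unfolding c_def by (intro add_mono mult_right_mono) auto
  moreover have "c * (1 - m)^2 + c * (1 + m)^2 = c * (2 + 2 * m^2)" by (simp add: power2_eq_square algebra_simps)
  moreover have "2 * c \<le> c * (2 + 2 * m^2)"
  proof -
    have "0 \<le> c" unfolding c_def using D_pos by simp
    then show ?thesis by (simp add: algebra_simps)
  qed
  moreover have "2 * real L / real D \<le> 2 * c" unfolding c_def using D_pos
    by (simp add: divide_right_mono)
  ultimately show ?thesis using ip unfolding m_def by linarith
qed

theorem det_bound:
  fixes \<delta> K :: real and k :: nat
  assumes \<delta>: "0 < \<delta>" and K: "0 \<le> K" and k: "1 \<le> k"
    and kv: "(1/4) ^ k \<le> (1 / (8 * (4 + 2 * K))) / 2"
    and k1d: "\<delta> * real N \<le> k1" and k2d: "\<delta> * real N \<le> k2"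
    and SK: "real (card S) \<le> K * real N"
  shows "(1 / (8 * (4 + 2 * K))) * \<delta> / (16 * real k) * real N ^ 2 \<le> real (mixing_time N S)"
proof -
  define v0 where "v0 = 1 / (8 * (4 + 2 * K))"
  define T where "T = real (mixing_time N S)"
  define V where "V = ip (\<lambda>y. g y - piE g) (\<lambda>y. g y - piE g)"
  define E where "E = (1/2) * (\<Sum>x<N. \<Sum>y<N. \<pi> x * P x y * (g x - g y)^2)"
  have Npos: "0 < real N" using N16 by simp
  have v0pos: "0 < v0" unfolding v0_def using K by simp
  have main: "V - 2 * real k * T * E \<le> (1/4)^k"
    unfolding V_def T_def E_def by (rule mixing_lower_abstract[OF _ k]) (rule g_bound)
  have DU: "real D \<le> (4 + 2 * K) * real N"
    using D_upper SK by (simp add: algebra_simps)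
  have V0: "v0 \<le> V"
  proof -
    have "2 * (real N / 16) / ((4 + 2 * K) * real N) \<le> 2 * real L / real D"
    proof (rule frac_le)
      show "0 \<le> 2 * real L" by simp
      show "2 * (real N / 16) \<le> 2 * real L" using L16 by simp
      show "0 < real D" by (rule D_pos)
      show "real D \<le> (4 + 2 * K) * real N" by (rule DU)
    qed
    moreover have "2 * (real N / 16) / ((4 + 2 * K) * real N) = v0"
    proof -
      have "0 < real N * 32 + K * (real N * 16)" using Npos K by (simp add: add_pos_nonneg)
      then show ?thesis unfolding v0_def using Npos K by (simp add: field_simps)
    qed
    ultimately show ?thesis using V_lower unfolding V_def by linarith
  qed
  have E0: "E \<le> 4 / (\<delta> * real N ^ 2)"
  proof -
    have "E \<le> (2 / k1 + 2 / k2) / real N" unfolding E_def by (rule E_bound)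
    also have "2 / k1 \<le> 2 / (\<delta> * real N)"
      using k1d \<delta> Npos k1pos by (intro divide_left_mono) (auto intro!: mult_pos_pos)
    also have "2 / k2 \<le> 2 / (\<delta> * real N)"
      using k2d \<delta> Npos k2pos by (intro divide_left_mono) (auto intro!: mult_pos_pos)
    also have "(2 / (\<delta> * real N) + 2 / (\<delta> * real N)) / real N = 4 / (\<delta> * real N ^ 2)"
      using Npos \<delta> by (simp add: field_simps power2_eq_square)
    finally show ?thesis using Npos by (simp add: divide_right_mono)
  qed
  have T0: "0 \<le> T" unfolding T_def by simp
  have "v0 / 2 \<le> 2 * real k * T * E" using main V0 kv unfolding v0_def by linarith
  also have "\<dots> \<le> 2 * real k * T * (4 / (\<delta> * real N ^ 2))"
    using E0 T0 by (intro mult_left_mono) auto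
  finally have "v0 / 2 \<le> 8 * real k * T / (\<delta> * real N ^ 2)" by (simp add: field_simps)
  then have "v0 / 2 * (\<delta> * real N ^ 2) \<le> 8 * real k * T"
    using \<delta> Npos by (simp add: field_simps)
  then have "v0 * \<delta> / (16 * real k) * real N ^ 2 \<le> T"
    using k by (simp add: field_simps)
  then show ?thesis unfolding v0_def T_def .
qed

end


context
  fixes s :: real
  assumes s2: "2 < s"
begin

definition zf :: "nat \<Rightarrow> real" where "zf n = real n powr (- s / 2)"
definition Zc :: real where "Zc = suminf zf"

lemma zf_nonneg: "0 \<le> zf n" unfolding zf_def by simp

lemma zf_summable: "summable zf"
proof -
  have "summable (\<lambda>n. real n powr (- s / 2))"
    by (subst summable_real_powr_iff) (use s2 in simp)
  then show ?thesis unfolding zf_def by simp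
qed

lemma zf_sum_le: "finite A \<Longrightarrow> sum zf A \<le> Zc"
  unfolding Zc_def by (rule sum_le_suminf[OF zf_summable]) (auto simp: zf_nonneg)

lemma Zc_nonneg: "0 \<le> Zc" using zf_sum_le[of "{}"] by simp

lemma zf_sum_inj: "finite A \<Longrightarrow> inj_on h A \<Longrightarrow> (\<Sum>x\<in>A. zf (h x)) \<le> Zc"
  using zf_sum_le[of "h ` A"] sum.reindex[of h A zf] by simp

lemma powr_s_le_zf: "1 \<le> n \<Longrightarrow> real n powr (- s) \<le> zf n"
  unfolding zf_def by (rule powr_mono) (use s2 in auto)

lemma prod_trick:
  assumes a: "1 \<le> a" and b: "1 \<le> b"
  shows "real (a + b - 1) powr (- s) \<le> zf a * zf b"
proof -
  let ?c = "real (a + b - 1)"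
  have c1: "real a \<le> ?c" "real b \<le> ?c" using a b by auto
  have ab0: "0 < real a * real b" using a b by simp
  have abc: "real a * real b \<le> ?c ^ 2"
    unfolding power2_eq_square by (rule mult_mono) (use c1 in auto)
  have c0: "0 < ?c" using a b by simp
  have sq: "?c powr 2 = ?c ^ 2" using powr_realpow[OF c0, of 2] by simp
  have "?c powr (- s) = (?c powr 2) powr (- s / 2)"
    by (simp only: powr_powr) simp
  also have "\<dots> = (?c ^ 2) powr (- s / 2)" by (simp only: sq)
  also have "\<dots> \<le> (real a * real b) powr (- s / 2)"
    by (rule powr_mono2') (use s2 ab0 abc in auto)
  also have "\<dots> = zf a * zf b" unfolding zf_def by (simp add: powr_mult)
  finally show ?thesis .
qed

lemma pair_sum:
  "(\<Sum>x\<in>{..k}. \<Sum>y\<in>{k<..<N}. real (y - x) powr (- s)) \<le> Zc * Zc"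
proof -
  have "(\<Sum>x\<in>{..k}. \<Sum>y\<in>{k<..<N}. real (y - x) powr (- s))
      \<le> (\<Sum>x\<in>{..k}. \<Sum>y\<in>{k<..<N}. zf (Suc k - x) * zf (y - k))"
  proof (intro sum_mono)
    fix x y assume x: "x \<in> {..k}" and y: "y \<in> {k<..<N}"
    have xk: "x \<le> k" and ky: "k < y" using x y by auto
    have e: "y - x = (Suc k - x) + (y - k) - 1" using xk ky by arith
    have a1: "1 \<le> Suc k - x" using xk by arith
    have b1: "1 \<le> y - k" using ky by arith
    show "real (y - x) powr (- s) \<le> zf (Suc k - x) * zf (y - k)"
      unfolding e by (rule prod_trick[OF a1 b1])
  qed
  also have "\<dots> = (\<Sum>x\<in>{..k}. zf (Suc k - x)) * (\<Sum>y\<in>{k<..<N}. zf (y - k))"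
    by (simp add: sum_product)
  also have "\<dots> \<le> Zc * Zc"
  proof (rule mult_mono)
    have "inj_on (\<lambda>x. Suc k - x) {..k}"
      by (rule inj_onI) auto
    then show "(\<Sum>x\<in>{..k}. zf (Suc k - x)) \<le> Zc" by (intro zf_sum_inj) auto
    have "inj_on (\<lambda>y. y - k) {k<..<N}"
      by (rule inj_onI) auto
    then show "(\<Sum>y\<in>{k<..<N}. zf (y - k)) \<le> Zc" by (intro zf_sum_inj) auto
  qed (auto intro: Zc_nonneg sum_nonneg zf_nonneg)
  finally show ?thesis .
qed

lemma row_sum1: "(\<Sum>y\<in>{x<..<N}. real (y - x) powr (- s)) \<le> Zc"
proof -
  have A: "(\<Sum>y\<in>{x<..<N}. real (y - x) powr (- s)) \<le> (\<Sum>y\<in>{x<..<N}. zf (y - x))"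
    by (intro sum_mono powr_s_le_zf) auto
  have "inj_on (\<lambda>y. y - x) {x<..<N}" by (rule inj_onI) auto
  then have B: "(\<Sum>y\<in>{x<..<N}. zf (y - x)) \<le> Zc" by (intro zf_sum_inj) auto
  show ?thesis using A B by linarith
qed

lemma row_sum2: "(\<Sum>y\<in>{x<..<N}. real (N - (y - x)) powr (- s)) \<le> Zc"
proof -
  have A: "(\<Sum>y\<in>{x<..<N}. real (N - (y - x)) powr (- s)) \<le> (\<Sum>y\<in>{x<..<N}. zf (N - (y - x)))"
    by (intro sum_mono powr_s_le_zf) auto
  have "inj_on (\<lambda>y. N - (y - x)) {x<..<N}" by (rule inj_onI) auto
  then have B: "(\<Sum>y\<in>{x<..<N}. zf (N - (y - x))) \<le> Zc" by (intro zf_sum_inj) auto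
  show ?thesis using A B by linarith
qed

lemma min_powr:
  assumes "1 \<le> a" "1 \<le> b" "min a b \<le> c"
  shows "(c::real) powr (- s) \<le> a powr (- s) + b powr (- s)"
proof -
  have "c powr (- s) \<le> (min a b) powr (- s)"
    by (rule powr_mono2') (use assms s2 in auto)
  also have "\<dots> \<le> a powr (- s) + b powr (- s)" by (cases "a \<le> b") (auto simp: min_def)
  finally show ?thesis .
qed

lemma tail_powr:
  assumes "1 \<le> a" "1 \<le> R"
  shows "(a::real) powr (2 - s) \<le> of_bool (a \<le> R) + R powr (2 - s)"
proof (cases "a \<le> R")
  case True
  have "a powr (2 - s) \<le> 1"
  proof -
    have "a powr (2 - s) \<le> 1 powr (2 - s)" by (rule powr_mono2') (use assms s2 in auto)
    then show ?thesis by simp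
  qed
  moreover have "0 \<le> R powr (2 - s)" by simp
  moreover have "of_bool (a \<le> R) = (1::real)" using True by simp
  ultimately show ?thesis by linarith
next
  case False
  then have "a powr (2 - s) \<le> R powr (2 - s)" by (intro powr_mono2') (use assms s2 in auto)
  then show ?thesis using False by simp
qed

end


lemma finite_vpairs: "finite (vpairs N)"
  by (rule finite_subset[of _ "{..<N} \<times> {..<N}"]) (auto simp: vpairs_def)

lemma card_vpairs: "card (vpairs N) \<le> N * N"
proof -
  have "card (vpairs N) \<le> card ({..<N} \<times> {..<N})"
    by (rule card_mono) (auto simp: vpairs_def)
  then show ?thesis by simp
qed

lemma vpairs_Sigma: "vpairs N = (SIGMA x:{..<N}. {x<..<N})"
  unfolding vpairs_def by auto

definition Zs :: "'a set \<Rightarrow> 'a set \<Rightarrow> 'a set \<Rightarrow> real" where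
  "Zs V B X = (\<Prod>e\<in>V. if e \<in> B then of_bool (e \<notin> X) else 1)"

lemma Zs_mult: "Zs V B X * Zs V C X = Zs V (B \<union> C) X"
  unfolding Zs_def prod.distrib[symmetric] by (intro prod.cong refl) auto

lemma Zs_Exg:
  fixes p :: "'a \<Rightarrow> real"
  assumes "finite V"
  shows "Exg V p (Zs V B) = (\<Prod>e\<in>V. if e \<in> B then 1 - p e else 1)"
proof -
  have "Exg V p (Zs V B) = Exg V p (\<lambda>X. \<Prod>e\<in>V. (\<lambda>e b. if e \<in> B then of_bool (\<not> b) else 1) e (e \<in> X))"
    unfolding Zs_def by simp
  also have "\<dots> = (\<Prod>e\<in>V. p e * (if e \<in> B then of_bool (\<not> True) else 1) + (1 - p e) * (if e \<in> B then of_bool (\<not> False) else 1))"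
    by (rule Exg_prod[OF assms])
  also have "\<dots> = (\<Prod>e\<in>V. if e \<in> B then 1 - p e else 1)"
    by (intro prod.cong refl) auto
  finally show ?thesis .
qed

lemma Zs_eq_of_bool:
  assumes "finite V" "X \<subseteq> V"
  shows "Zs V B X = of_bool (\<forall>e\<in>X. e \<notin> B)"
proof (cases "\<exists>e\<in>X. e \<in> B")
  case True
  then obtain e where e: "e \<in> X" "e \<in> B" by blast
  then have "e \<in> V" using assms by auto
  then have "Zs V B X = 0" unfolding Zs_def using e assms(1)
    by (intro prod_zero) auto
  then show ?thesis using e by auto
next
  case False
  then have "Zs V B X = 1" unfolding Zs_def by (intro prod.neutral) auto
  then show ?thesis using False by auto
qed

lemma exp_minus_one_le: "0 \<le> (u::real) \<Longrightarrow> exp u - 1 \<le> u * exp u"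
proof -
  assume u: "0 \<le> u"
  have h: "1 - u \<le> exp (- u)" using exp_ge_add_one_self[of "- u"] by simp
  have "(1 - u) * exp u \<le> exp (- u) * exp u" using h by (rule mult_right_mono) simp
  also have "exp (- u) * exp u = 1" by (simp add: exp_add[symmetric])
  finally show ?thesis by (simp add: algebra_simps)
qed

context
  fixes s \<beta> :: real
  assumes s2: "2 < s" and \<beta>0: "0 < \<beta>"
begin

definition wt :: "nat \<Rightarrow> nat \<times> nat \<Rightarrow> real" where
  "wt N e = real (cdist N (fst e) (snd e)) powr (- s)"

definition sig :: "nat \<Rightarrow> (nat \<times> nat) set \<Rightarrow> real" where
  "sig N B = (\<Sum>e\<in>vpairs N. if e \<in> B then wt N e else 0)"

lemma wt_nonneg: "0 \<le> wt N e" unfolding wt_def by simp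

lemma sig_nonneg: "0 \<le> sig N B" unfolding sig_def by (intro sum_nonneg) (auto simp: wt_nonneg)

lemma sig_mono: "B \<subseteq> C \<Longrightarrow> sig N B \<le> sig N C"
  unfolding sig_def by (intro sum_mono) (auto simp: wt_nonneg)

lemma sig_union: "sig N (B \<union> C) = sig N B + sig N C - sig N (B \<inter> C)"
  unfolding sig_def by (simp add: sum.distrib[symmetric] sum_subtractf[symmetric]) (intro sum.cong refl, auto)

lemma ep_eq: "1 - edge_prob s \<beta> N e = exp (- \<beta> * wt N e)"
  unfolding edge_prob_def wt_def by simp

lemma ep_range: "0 \<le> edge_prob s \<beta> N e \<and> edge_prob s \<beta> N e \<le> 1"
proof -
  have "exp (- \<beta> * wt N e) \<le> 1" using \<beta>0 wt_nonneg[of N e] by (simp add: mult_nonneg_nonneg)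
  moreover have "0 < exp (- \<beta> * wt N e)" by simp
  ultimately show ?thesis using ep_eq[of N e] by linarith
qed

lemma ep_le: "edge_prob s \<beta> N e \<le> \<beta> * wt N e"
  using exp_ge_add_one_self[of "- \<beta> * wt N e"] ep_eq[of N e] by linarith

abbreviation "pp N \<equiv> edge_prob s \<beta> N"

lemma graph_prob_Prg: "graph_prob s \<beta> N A = Prg (vpairs N) (pp N) A"
  unfolding graph_prob_def Prg_eq[OF finite_vpairs] wtg_def by simp

lemma Zs_Exg_sig: "Exg (vpairs N) (pp N) (Zs (vpairs N) B) = exp (- \<beta> * sig N B)"
proof -
  have "Exg (vpairs N) (pp N) (Zs (vpairs N) B) = (\<Prod>e\<in>vpairs N. exp (if e \<in> B then - \<beta> * wt N e else 0))"
    unfolding Zs_Exg[OF finite_vpairs] by (intro prod.cong refl) (simp add: ep_eq)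
  also have "\<dots> = exp (\<Sum>e\<in>vpairs N. if e \<in> B then - \<beta> * wt N e else 0)"
    by (rule exp_sum[symmetric]) (rule finite_vpairs)
  also have "(\<Sum>e\<in>vpairs N. if e \<in> B then - \<beta> * wt N e else 0) = - \<beta> * sig N B"
    unfolding sig_def by (simp add: sum_distrib_left if_distrib cong: if_cong)
  finally show ?thesis .
qed

lemma cov_bound:
  assumes "sig N (B \<inter> C) \<le> M"
  shows "exp (- \<beta> * sig N (B \<union> C)) - exp (- \<beta> * sig N B) * exp (- \<beta> * sig N C)
      \<le> \<beta> * exp (\<beta> * M) * sig N (B \<inter> C)"
proof -
  let ?u = "\<beta> * sig N (B \<inter> C)"
  have u0: "0 \<le> ?u" using \<beta>0 sig_nonneg by simp
  have e1: "- \<beta> * sig N (B \<union> C) = - \<beta> * (sig N B + sig N C) + ?u"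
    unfolding sig_union by (simp add: algebra_simps)
  have e2: "exp (- \<beta> * sig N B) * exp (- \<beta> * sig N C) = exp (- \<beta> * (sig N B + sig N C))"
    by (simp add: exp_add[symmetric] algebra_simps)
  have e3: "exp (- \<beta> * sig N (B \<union> C)) = exp (- \<beta> * (sig N B + sig N C)) * exp ?u"
    by (simp only: e1 exp_add)
  have "exp (- \<beta> * sig N (B \<union> C)) - exp (- \<beta> * sig N B) * exp (- \<beta> * sig N C)
      = exp (- \<beta> * (sig N B + sig N C)) * (exp ?u - 1)"
    unfolding e2 e3 by (simp add: right_diff_distrib)
  also have "\<dots> \<le> 1 * (exp ?u - 1)"
  proof (rule mult_right_mono)
    show "exp (- \<beta> * (sig N B + sig N C)) \<le> 1"
      using \<beta>0 sig_nonneg[of N B] sig_nonneg[of N C] by (simp add: mult_nonneg_nonneg)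
    show "0 \<le> exp ?u - 1" using u0 by simp
  qed
  also have "\<dots> \<le> ?u * exp ?u" using exp_minus_one_le[OF u0] by simp
  also have "\<dots> \<le> ?u * exp (\<beta> * M)"
    using assms u0 \<beta>0 by (intro mult_left_mono) auto
  finally show ?thesis by (simp add: mult_ac)
qed

end


definition Bk :: "nat \<Rightarrow> nat \<Rightarrow> (nat \<times> nat) set" where
  "Bk N k = {(x, y). cdist N x y \<noteq> 1 \<and> x \<le> k \<and> k < y \<and> \<not> (x < Lw N \<and> 6 * Lw N \<le> y)}"

lemma good_Zs:
  assumes "X \<subseteq> vpairs N"
  shows "of_bool (good N X k) = Zs (vpairs N) (Bk N k) X"
  unfolding Zs_eq_of_bool[OF finite_vpairs assms] good_def Bk_def by auto

lemma card_good_sum: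
  "real (card {k \<in> W. good N X k}) = (\<Sum>k\<in>W. of_bool (good N X k))" if "finite W"
proof -
  have "{k \<in> W. good N X k} = W \<inter> {k. good N X k}" by auto
  then show ?thesis using that by simp
qed

lemma cdist_vp: "(x, y) \<in> vpairs N \<Longrightarrow> cdist N x y = min (y - x) (N - (y - x))"
  unfolding vpairs_def cdist_def by auto

lemma cdist_Bk:
  assumes N: "16 \<le> N" and e: "(x, y) \<in> vpairs N" "(x, y) \<in> Bk N k"
  shows "min (y - x) (Lw N) \<le> cdist N x y"
proof -
  have xy: "x < y" "y < N" using e unfolding vpairs_def by auto
  have c: "x \<ge> Lw N \<or> y < 6 * Lw N" using e unfolding Bk_def by auto
  have L8: "8 * Lw N \<le> N" unfolding Lw_def by simp
  have "Lw N \<le> N - (y - x)" using c xy L8 by auto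
  then show ?thesis unfolding cdist_vp[OF e(1)] by auto
qed

lemma card_short_pairs: "card {e \<in> vpairs N. snd e - fst e \<le> R} \<le> N * R"
proof -
  have "{e \<in> vpairs N. snd e - fst e \<le> R} \<subseteq> (\<lambda>(x, j). (x, x + j)) ` ({..<N} \<times> {1..R})"
  proof
    fix e assume e: "e \<in> {e \<in> vpairs N. snd e - fst e \<le> R}"
    obtain x y where xy: "e = (x, y)" by (cases e)
    have "x < y" "y < N" "y - x \<le> R" using e xy unfolding vpairs_def by auto
    then have "(x, y - x) \<in> {..<N} \<times> {1..R}" "(x, y) = (\<lambda>(x, j). (x, x + j)) (x, y - x)" by auto
    then show "e \<in> (\<lambda>(x, j). (x, x + j)) ` ({..<N} \<times> {1..R})" using xy by blast
  qed
  then have "card {e \<in> vpairs N. snd e - fst e \<le> R} \<le> card ((\<lambda>(x, j). (x, x + j)) ` ({..<N} \<times> {1..R}))"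
    by (intro card_mono) auto
  also have "\<dots> \<le> card ({..<N} \<times> {1..R})" by (rule card_image_le) simp
  finally show ?thesis by simp
qed

lemma sum_sq_expand: "(\<Sum>k\<in>W. \<Sum>l\<in>W. f k * f l * c) = (\<Sum>k\<in>W. f k) * (\<Sum>k\<in>W. f k) * (c::real)"
  by (simp add: sum_distrib_left sum_distrib_right mult.assoc) (rule sum.swap)

context
  fixes s \<beta> :: real
  assumes s2: "2 < s" and \<beta>0: "0 < \<beta>"
begin

lemma wt_Bk:
  assumes N: "16 \<le> N" and e: "e \<in> vpairs N" "e \<in> Bk N k"
  shows "wt s N e \<le> real (snd e - fst e) powr (- s) + real (Lw N) powr (- s)"
proof -
  obtain x y where xy: "e = (x, y)" by (cases e)
  have "x < y" using e xy unfolding vpairs_def by auto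
  have L1: "1 \<le> Lw N" unfolding Lw_def using N by simp
  have "min (real (y - x)) (real (Lw N)) \<le> real (cdist N x y)"
    using cdist_Bk[OF N e[unfolded xy]] by simp
  then have "real (cdist N x y) powr (- s) \<le> real (y - x) powr (- s) + real (Lw N) powr (- s)"
    by (intro min_powr[OF s2]) (use \<open>x < y\<close> L1 in auto)
  then show ?thesis unfolding wt_def[OF s2 \<beta>0] xy by simp
qed

lemma sig_Bk:
  assumes N: "16 \<le> N"
  shows "sig s N (Bk N k) \<le> Zc s * Zc s + real N ^ 2 * real (Lw N) powr (- s)"
proof -
  let ?V = "vpairs N \<inter> Bk N k"
  have fin: "finite ?V" using finite_vpairs by auto
  have "sig s N (Bk N k) = (\<Sum>e\<in>?V. wt s N e)"
    unfolding sig_def[OF s2 \<beta>0] using finite_vpairs by (simp add: sum.inter_restrict)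
  also have "\<dots> \<le> (\<Sum>e\<in>?V. real (snd e - fst e) powr (- s) + real (Lw N) powr (- s))"
    by (intro sum_mono wt_Bk[OF N]) auto
  also have "\<dots> = (\<Sum>e\<in>?V. real (snd e - fst e) powr (- s)) + real (card ?V) * real (Lw N) powr (- s)"
    by (simp add: sum.distrib)
  also have "(\<Sum>e\<in>?V. real (snd e - fst e) powr (- s)) \<le> (\<Sum>e\<in>{..k} \<times> {k<..<N}. real (snd e - fst e) powr (- s))"
    by (rule sum_mono2) (auto simp: vpairs_def Bk_def)
  also have "\<dots> = (\<Sum>x\<in>{..k}. \<Sum>y\<in>{k<..<N}. real (y - x) powr (- s))"
    by (simp only: sum.cartesian_product) (intro sum.cong refl, simp add: split_beta)
  also have "\<dots> \<le> Zc s * Zc s" by (rule pair_sum[OF s2])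
  also have "real (card ?V) * real (Lw N) powr (- s) \<le> real N ^ 2 * real (Lw N) powr (- s)"
  proof (rule mult_right_mono)
    have "card ?V \<le> card (vpairs N)" by (rule card_mono[OF finite_vpairs]) auto
    also have "\<dots> \<le> N * N" by (rule card_vpairs)
    finally show "real (card ?V) \<le> real N ^ 2" by (simp add: power2_eq_square flip: of_nat_mult)
  qed simp
  finally show ?thesis by simp
qed

lemma sig_pair_sum:
  assumes N: "16 \<le> N" and W: "W \<subseteq> {..<N}" and R: "1 \<le> R"
  shows "(\<Sum>k\<in>W. \<Sum>l\<in>W. sig s N (Bk N k \<inter> Bk N l))
    \<le> real N * real R + real N ^ 2 * real R powr (2 - s) + real N ^ 2 * (real N ^ 2 * real (Lw N) powr (- s))"
proof -
  let ?V = "vpairs N"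
  let ?a = "\<lambda>k e. of_bool (e \<in> Bk N k) :: real"
  let ?c = "\<lambda>e. \<Sum>k\<in>W. ?a k e"
  have finW: "finite W" using W finite_subset by blast
  have "(\<Sum>k\<in>W. \<Sum>l\<in>W. sig s N (Bk N k \<inter> Bk N l)) = (\<Sum>k\<in>W. \<Sum>l\<in>W. \<Sum>e\<in>?V. ?a k e * ?a l e * wt s N e)"
    unfolding sig_def[OF s2 \<beta>0] by (intro sum.cong refl) auto
  also have "\<dots> = (\<Sum>k\<in>W. \<Sum>e\<in>?V. \<Sum>l\<in>W. ?a k e * ?a l e * wt s N e)"
    by (intro sum.cong refl) (rule sum.swap)
  also have "\<dots> = (\<Sum>e\<in>?V. \<Sum>k\<in>W. \<Sum>l\<in>W. ?a k e * ?a l e * wt s N e)"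
    by (rule sum.swap)
  also have "\<dots> = (\<Sum>e\<in>?V. ?c e * ?c e * wt s N e)"
    by (intro sum.cong refl) (rule sum_sq_expand)
  also have "\<dots> \<le> (\<Sum>e\<in>?V. of_bool (snd e - fst e \<le> R) + (real R powr (2 - s) + real N ^ 2 * real (Lw N) powr (- s)))"
  proof (rule sum_mono)
    fix e assume eV: "e \<in> ?V"
    obtain x y where xy: "e = (x, y)" by (cases e)
    have xyN: "x < y" "y < N" using eV xy unfolding vpairs_def by auto
    have c0: "0 \<le> ?c e" by (intro sum_nonneg) auto
    have cN: "?c e \<le> real N"
    proof -
      have "?c e \<le> (\<Sum>k\<in>W. 1)" by (intro sum_mono) auto
      also have "\<dots> = real (card W)" by simp
      also have "\<dots> \<le> real N" using card_mono[OF _ W] by simp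
      finally show ?thesis .
    qed
    have cxy: "?c e \<le> real (y - x)"
    proof -
      have "?c e \<le> (\<Sum>k\<in>W. of_bool (k \<in> {x..<y}))"
        by (intro sum_mono) (auto simp: Bk_def xy)
      also have "\<dots> = real (card (W \<inter> {k. x \<le> k \<and> k < y}))" using finW by simp
      also have "\<dots> \<le> real (card {x..<y})"
      proof -
        have "W \<inter> {k. x \<le> k \<and> k < y} \<subseteq> {x..<y}" by auto
        then have "card (W \<inter> {k. x \<le> k \<and> k < y}) \<le> card {x..<y}" by (intro card_mono) auto
        then show ?thesis by linarith
      qed
      finally show ?thesis by simp
    qed
    have b0: "0 \<le> real R powr (2 - s) + real N ^ 2 * real (Lw N) powr (- s)" by simp
    show "?c e * ?c e * wt s N e \<le> of_bool (snd e - fst e \<le> R) + (real R powr (2 - s) + real N ^ 2 * real (Lw N) powr (- s))"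
    proof (cases "\<exists>k\<in>W. e \<in> Bk N k")
      case False
      then have "?c e = 0" by (intro sum.neutral) auto
      then show ?thesis using b0 by simp
    next
      case True
      then obtain k where "e \<in> Bk N k" by blast
      then have w: "wt s N e \<le> real (y - x) powr (- s) + real (Lw N) powr (- s)"
        using wt_Bk[OF N eV] xy by simp
      have yx1: "1 \<le> real (y - x)" using xyN by simp
      have "?c e * ?c e * wt s N e \<le> ?c e * ?c e * (real (y - x) powr (- s) + real (Lw N) powr (- s))"
        using w c0 by (intro mult_left_mono) auto
      also have "\<dots> = (?c e * ?c e) * real (y - x) powr (- s) + (?c e * ?c e) * real (Lw N) powr (- s)"
        by (simp add: algebra_simps)
      also have "(?c e * ?c e) * real (y - x) powr (- s) \<le> (real (y - x) * real (y - x)) * real (y - x) powr (- s)"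
        using cxy c0 by (intro mult_right_mono mult_mono) auto
      also have "(real (y - x) * real (y - x)) * real (y - x) powr (- s) = real (y - x) powr (2 - s)"
      proof -
        have "real (y - x) powr (2 - s) = real (y - x) powr 2 * real (y - x) powr (- s)"
          using powr_add[of "real (y - x)" 2 "- s"] by simp
        also have "real (y - x) powr 2 = real (y - x) * real (y - x)"
          using powr_realpow[of "real (y - x)" 2] yx1 by (simp add: power2_eq_square)
        finally show ?thesis by simp
      qed
      also have "real (y - x) powr (2 - s) \<le> of_bool (real (y - x) \<le> real R) + real R powr (2 - s)"
        by (rule tail_powr[OF s2 yx1]) (use R in simp)
      also have "(?c e * ?c e) * real (Lw N) powr (- s) \<le> real N ^ 2 * real (Lw N) powr (- s)"
        using cN c0 by (intro mult_right_mono) (auto simp: power2_eq_square intro: mult_mono)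
      finally show ?thesis using xy by simp
    qed
  qed
  also have "\<dots> = real (card {e \<in> ?V. snd e - fst e \<le> R}) + real (card ?V) * (real R powr (2 - s) + real N ^ 2 * real (Lw N) powr (- s))"
  proof -
    have "(\<Sum>e\<in>?V. of_bool (snd e - fst e \<le> R) :: real) = real (card {e \<in> ?V. snd e - fst e \<le> R})"
    proof -
      have "{e \<in> ?V. snd e - fst e \<le> R} = ?V \<inter> {e. snd e - fst e \<le> R}" by auto
      then show ?thesis using finite_vpairs by simp
    qed
    then show ?thesis by (simp add: sum.distrib)
  qed
  also have "\<dots> \<le> real N * real R + real N ^ 2 * (real R powr (2 - s) + real N ^ 2 * real (Lw N) powr (- s))"
  proof (rule add_mono)
    show "real (card {e \<in> ?V. snd e - fst e \<le> R}) \<le> real N * real R"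
      using card_short_pairs[of N R] by (simp flip: of_nat_mult)
    show "real (card ?V) * (real R powr (2 - s) + real N ^ 2 * real (Lw N) powr (- s))
        \<le> real N ^ 2 * (real R powr (2 - s) + real N ^ 2 * real (Lw N) powr (- s))"
      using card_vpairs[of N] by (intro mult_right_mono) (auto simp: power2_eq_square simp flip: of_nat_mult)
  qed
  finally show ?thesis by (simp add: algebra_simps)
qed

end


definition Ps :: "'a set \<Rightarrow> 'a set \<Rightarrow> 'a set \<Rightarrow> real" where
  "Ps V C X = (\<Prod>e\<in>V. if e \<in> C then of_bool (e \<in> X) else 1)"

lemma Ps_mult: "Ps V C X * Ps V D X = Ps V (C \<union> D) X"
  unfolding Ps_def prod.distrib[symmetric] by (intro prod.cong refl) auto

lemma Ps_Exg:
  fixes p :: "'a \<Rightarrow> real"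
  assumes "finite V"
  shows "Exg V p (Ps V C) = prod p (V \<inter> C)"
proof -
  have "Exg V p (Ps V C) = Exg V p (\<lambda>X. \<Prod>e\<in>V. (\<lambda>e b. if e \<in> C then of_bool b else 1) e (e \<in> X))"
    unfolding Ps_def by simp
  also have "\<dots> = (\<Prod>e\<in>V. p e * (if e \<in> C then of_bool True else 1) + (1 - p e) * (if e \<in> C then of_bool False else 1))"
    by (rule Exg_prod[OF assms])
  also have "\<dots> = (\<Prod>e\<in>V. if e \<in> C then p e else 1)"
    by (intro prod.cong refl) auto
  also have "\<dots> = prod p (V \<inter> C)" by (rule prod.inter_restrict[symmetric, OF assms])
  finally show ?thesis .
qed

lemma Ps_single:
  assumes "finite V" "e \<in> V" "X \<subseteq> V"
  shows "Ps V {e} X = of_bool (e \<in> X)"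
proof -
  have "Ps V {e} X = (\<Prod>e'\<in>V. if e' = e then of_bool (e' \<in> X) else 1)"
    unfolding Ps_def by (intro prod.cong refl) auto
  also have "\<dots> = of_bool (e \<in> X)" using assms by (simp add: prod.delta')
  finally show ?thesis .
qed

context
  fixes s \<beta> :: real
  assumes s2: "2 < s" and \<beta>0: "0 < \<beta>"
begin

lemma pp_range: "\<And>e. e \<in> vpairs N \<Longrightarrow> 0 \<le> pp s \<beta> N e \<and> pp s \<beta> N e \<le> 1"
  using ep_range[OF s2 \<beta>0] by blast

lemma prob_few_good:
  assumes N16: "16 \<le> N" and W: "W \<subseteq> {..<N}" and cW: "card W = Lw N"
    and small: "real N ^ 2 * real (Lw N) powr (- s) \<le> 1" and R: "1 \<le> R"
  shows "Prg (vpairs N) (pp s \<beta> N) {X. real (card {k \<in> W. good N X k}) < real (Lw N) * exp (- \<beta> * (Zc s * Zc s + 1)) / 2}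
    \<le> \<beta> * exp (\<beta> * (Zc s * Zc s + 1)) *
       (real N * real R + real N ^ 2 * real R powr (2 - s) + real N ^ 2 * (real N ^ 2 * real (Lw N) powr (- s)))
       / (real (Lw N) * exp (- \<beta> * (Zc s * Zc s + 1)) / 2) ^ 2"
proof -
  define V where "V = vpairs N"
  define p where "p = pp s \<beta> N"
  define M where "M = Zc s * Zc s + 1"
  define q0 where "q0 = exp (- \<beta> * M)"
  define L where "L = Lw N"
  define Bnd where "Bnd = real N * real R + real N ^ 2 * real R powr (2 - s) + real N ^ 2 * (real N ^ 2 * real L powr (- s))"
  define f where "f = (\<lambda>k. Zs V (Bk N k))"
  define Z where "Z = (\<lambda>X. \<Sum>k\<in>W. f k X)"
  have finV: "finite V" unfolding V_def by (rule finite_vpairs)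
  have prange: "\<And>e. e \<in> V \<Longrightarrow> 0 \<le> p e \<and> p e \<le> 1" unfolding V_def p_def by (rule pp_range)
  have finW: "finite W" using W finite_subset by blast
  have L2: "2 \<le> L" unfolding L_def Lw_def using N16 by simp
  have q0pos: "0 < q0" unfolding q0_def by simp
  have sigM: "sig s N (Bk N k) \<le> M" for k
    using sig_Bk[OF s2 \<beta>0 N16, of k] small unfolding M_def by simp
  have Ef: "Exg V p (f k) = exp (- \<beta> * sig s N (Bk N k))" for k
    unfolding f_def V_def p_def by (rule Zs_Exg_sig[OF s2 \<beta>0])
  have ZX: "Z X = real (card {k \<in> W. good N X k})" if "X \<subseteq> V" for X
    unfolding Z_def f_def using good_Zs[of X N] that card_good_sum[OF finW, of N X] unfolding V_def by simp
  define \<mu> where "\<mu> = Exg V p Z"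
  have mu_eq: "\<mu> = (\<Sum>k\<in>W. Exg V p (f k))" unfolding \<mu>_def Z_def by (rule Exg_sum)
  have mu_ge: "real L * q0 \<le> \<mu>"
  proof -
    have "(\<Sum>k\<in>W. q0) \<le> (\<Sum>k\<in>W. Exg V p (f k))"
    proof (rule sum_mono)
      fix k assume "k \<in> W"
      show "q0 \<le> Exg V p (f k)" unfolding Ef q0_def using sigM[of k] \<beta>0 by simp
    qed
    then show ?thesis using cW unfolding mu_eq L_def by simp
  qed
  define a where "a = real L * q0 / 2"
  have a0: "0 < a" unfolding a_def using L2 q0pos by simp
  have "Prg V p {X. real (card {k \<in> W. good N X k}) < a} \<le> Prg V p {X. \<bar>Z X - Exg V p Z\<bar> \<ge> a}"
  proof (rule Prg_mono[OF prange])
    fix X assume "X \<subseteq> V" "X \<in> {X. real (card {k \<in> W. good N X k}) < a}"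
    then have "Z X < a" using ZX by simp
    moreover have "2 * a \<le> Exg V p Z" using mu_ge unfolding a_def \<mu>_def by simp
    ultimately show "X \<in> {X. \<bar>Z X - Exg V p Z\<bar> \<ge> a}" by simp
  qed
  also have "\<dots> \<le> Exg V p (\<lambda>X. (Z X - Exg V p Z)^2) / a^2" by (rule chebyshev_g[OF finV prange a0])
  also have "Exg V p (\<lambda>X. (Z X - Exg V p Z)^2)
      = (\<Sum>i\<in>W. \<Sum>j\<in>W. Exg V p (\<lambda>X. f i X * f j X) - Exg V p (f i) * Exg V p (f j))"
    unfolding Z_def Exg_sum by (rule var_sum_g[OF finV])
  also have "\<dots> \<le> (\<Sum>i\<in>W. \<Sum>j\<in>W. \<beta> * exp (\<beta> * M) * sig s N (Bk N i \<inter> Bk N j))"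
  proof (intro sum_mono)
    fix i j assume "i \<in> W" "j \<in> W"
    have "Exg V p (\<lambda>X. f i X * f j X) = Exg V p (Zs V (Bk N i \<union> Bk N j))"
      unfolding f_def Zs_mult by simp
    also have "\<dots> = exp (- \<beta> * sig s N (Bk N i \<union> Bk N j))"
      unfolding V_def p_def by (rule Zs_Exg_sig[OF s2 \<beta>0])
    finally have e1: "Exg V p (\<lambda>X. f i X * f j X) = exp (- \<beta> * sig s N (Bk N i \<union> Bk N j))" .
    have "sig s N (Bk N i \<inter> Bk N j) \<le> M"
      using sig_mono[OF s2 \<beta>0, of "Bk N i \<inter> Bk N j" "Bk N i" N] sigM[of i] by simp
    then show "Exg V p (\<lambda>X. f i X * f j X) - Exg V p (f i) * Exg V p (f j)
        \<le> \<beta> * exp (\<beta> * M) * sig s N (Bk N i \<inter> Bk N j)"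
      unfolding e1 Ef by (rule cov_bound[OF s2 \<beta>0])
  qed
  also have "\<dots> = \<beta> * exp (\<beta> * M) * (\<Sum>i\<in>W. \<Sum>j\<in>W. sig s N (Bk N i \<inter> Bk N j))"
    by (simp add: sum_distrib_left)
  also have "\<dots> \<le> \<beta> * exp (\<beta> * M) * Bnd"
    unfolding Bnd_def L_def using \<beta>0 by (intro mult_left_mono sig_pair_sum[OF s2 \<beta>0 N16 W R]) auto
  finally have "Prg V p {X. real (card {k \<in> W. good N X k}) < a} \<le> \<beta> * exp (\<beta> * M) * Bnd / a^2"
    using a0 by (simp add: divide_right_mono)
  then show ?thesis unfolding V_def p_def a_def q0_def M_def Bnd_def L_def .
qed

lemma sum_wt: "(\<Sum>e\<in>vpairs N. wt s N e) \<le> 2 * Zc s * real N"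
proof -
  have "(\<Sum>e\<in>vpairs N. wt s N e) = (\<Sum>x<N. \<Sum>y\<in>{x<..<N}. wt s N (x, y))"
    unfolding vpairs_Sigma by (subst sum.Sigma) auto
  also have "\<dots> \<le> (\<Sum>x<N. \<Sum>y\<in>{x<..<N}. real (y - x) powr (- s) + real (N - (y - x)) powr (- s))"
  proof (intro sum_mono)
    fix x y assume x: "x \<in> {..<N}" and y: "y \<in> {x<..<N}"
    have vp: "(x, y) \<in> vpairs N" using x y unfolding vpairs_def by auto
    have "real (cdist N x y) = min (real (y - x)) (real (N - (y - x)))"
      unfolding cdist_vp[OF vp] by simp
    then show "wt s N (x, y) \<le> real (y - x) powr (- s) + real (N - (y - x)) powr (- s)"
      unfolding wt_def[OF s2 \<beta>0] using x y by (intro min_powr[OF s2]) auto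
  qed
  also have "\<dots> = (\<Sum>x<N. (\<Sum>y\<in>{x<..<N}. real (y - x) powr (- s)) + (\<Sum>y\<in>{x<..<N}. real (N - (y - x)) powr (- s)))"
    by (simp add: sum.distrib)
  also have "\<dots> \<le> (\<Sum>x<N. Zc s + Zc s)"
    by (intro sum_mono add_mono row_sum1[OF s2] row_sum2[OF s2])
  finally show ?thesis by (simp add: mult_ac)
qed

lemma prob_many_edges:
  assumes N: "1 \<le> N"
  shows "Prg (vpairs N) (pp s \<beta> N) {X. (2 * \<beta> * Zc s + 1) * real N \<le> real (card X)}
    \<le> 2 * \<beta> * Zc s / real N"
proof -
  define V where "V = vpairs N"
  define p where "p = pp s \<beta> N"
  define f where "f = (\<lambda>e. Ps V {e})"
  define Y where "Y = (\<lambda>X. \<Sum>e\<in>V. f e X)"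
  have finV: "finite V" unfolding V_def by (rule finite_vpairs)
  have prange: "\<And>e. e \<in> V \<Longrightarrow> 0 \<le> p e \<and> p e \<le> 1" unfolding V_def p_def by (rule pp_range)
  have Ef: "e \<in> V \<Longrightarrow> Exg V p (f e) = p e" for e
    unfolding f_def Ps_Exg[OF finV] by (subgoal_tac "V \<inter> {e} = {e}") auto
  have YX: "X \<subseteq> V \<Longrightarrow> Y X = real (card X)" for X
  proof -
    assume X: "X \<subseteq> V"
    have "Y X = (\<Sum>e\<in>V. of_bool (e \<in> X))" unfolding Y_def f_def
      by (intro sum.cong refl) (rule Ps_single[OF finV _ X])
    also have "\<dots> = real (card (V \<inter> {e. e \<in> X}))" using finV by simp
    also have "V \<inter> {e. e \<in> X} = X" using X by auto
    finally show ?thesis .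
  qed
  have EY: "Exg V p Y = (\<Sum>e\<in>V. p e)" unfolding Y_def Exg_sum by (intro sum.cong refl) (rule Ef)
  have EYb: "Exg V p Y \<le> 2 * \<beta> * Zc s * real N"
  proof -
    have "(\<Sum>e\<in>V. p e) \<le> (\<Sum>e\<in>V. \<beta> * wt s N e)"
      unfolding p_def by (intro sum_mono ep_le[OF s2 \<beta>0])
    also have "\<dots> = \<beta> * (\<Sum>e\<in>V. wt s N e)" by (simp add: sum_distrib_left)
    also have "\<dots> \<le> \<beta> * (2 * Zc s * real N)" unfolding V_def using \<beta>0 by (intro mult_left_mono sum_wt) auto
    finally show ?thesis unfolding EY by simp
  qed
  have Nr: "0 < real N" using N by simp
  have "Prg V p {X. (2 * \<beta> * Zc s + 1) * real N \<le> real (card X)} \<le> Prg V p {X. \<bar>Y X - Exg V p Y\<bar> \<ge> real N}"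
  proof (rule Prg_mono[OF prange])
    fix X assume X: "X \<subseteq> V" "X \<in> {X. (2 * \<beta> * Zc s + 1) * real N \<le> real (card X)}"
    then have "(2 * \<beta> * Zc s + 1) * real N \<le> Y X" using YX by simp
    then show "X \<in> {X. \<bar>Y X - Exg V p Y\<bar> \<ge> real N}" using EYb by (simp add: algebra_simps)
  qed
  also have "\<dots> \<le> Exg V p (\<lambda>X. (Y X - Exg V p Y)^2) / (real N)^2"
    by (rule chebyshev_g[OF finV prange Nr])
  also have "Exg V p (\<lambda>X. (Y X - Exg V p Y)^2)
      = (\<Sum>i\<in>V. \<Sum>j\<in>V. Exg V p (\<lambda>X. f i X * f j X) - Exg V p (f i) * Exg V p (f j))"
    unfolding Y_def Exg_sum by (rule var_sum_g[OF finV])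
  also have "\<dots> = (\<Sum>i\<in>V. \<Sum>j\<in>V. if i = j then p i - p i * p i else 0)"
  proof (intro sum.cong refl)
    fix i j assume i: "i \<in> V" and j: "j \<in> V"
    have "Exg V p (\<lambda>X. f i X * f j X) = prod p (V \<inter> ({i} \<union> {j}))"
      unfolding f_def Ps_mult by (rule Ps_Exg[OF finV])
    also have "V \<inter> ({i} \<union> {j}) = {i, j}" using i j by auto
    finally show "Exg V p (\<lambda>X. f i X * f j X) - Exg V p (f i) * Exg V p (f j) = (if i = j then p i - p i * p i else 0)"
      using Ef[OF i] Ef[OF j] by auto
  qed
  also have "\<dots> = (\<Sum>i\<in>V. p i - p i * p i)" using finV by (simp add: sum.delta)
  also have "\<dots> \<le> (\<Sum>i\<in>V. p i)" using prange by (intro sum_mono) auto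
  also have "\<dots> \<le> 2 * \<beta> * Zc s * real N" using EYb EY by simp
  finally have "Prg V p {X. (2 * \<beta> * Zc s + 1) * real N \<le> real (card X)} \<le> 2 * \<beta> * Zc s * real N / (real N)^2"
    using Nr by (simp add: divide_right_mono)
  also have "\<dots> = 2 * \<beta> * Zc s / real N" using Nr by (simp add: power2_eq_square)
  finally show ?thesis unfolding V_def p_def .
qed

end


lemma lim_aux1: "((\<lambda>N::nat. 1 / sqrt (real N)) \<longlongrightarrow> 0) sequentially"
  by real_asymp

lemma lim_aux2: "filterlim (\<lambda>N::nat. sqrt (real N) / 2) at_top sequentially"
  by real_asymp

lemma lim_aux3: "filterlim (\<lambda>N::nat. real N / 16) at_top sequentially"
  by real_asymp

context
  fixes s \<beta> :: real
  assumes s2: "2 < s" and \<beta>0: "0 < \<beta>"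
begin

definition UB :: "nat \<Rightarrow> real" where
  "UB N = 1 / sqrt (real N) + (sqrt (real N) / 2) powr (2 - s) + 256 * (real N / 16) powr (2 - s)"

lemma UB_lim: "(UB \<longlongrightarrow> 0) sequentially"
proof -
  have a: "((\<lambda>N::nat. (sqrt (real N) / 2) powr (2 - s)) \<longlongrightarrow> 0) sequentially"
    by (rule tendsto_neg_powr[OF _ lim_aux2]) (use s2 in simp)
  have b: "((\<lambda>N::nat. (real N / 16) powr (2 - s)) \<longlongrightarrow> 0) sequentially"
    by (rule tendsto_neg_powr[OF _ lim_aux3]) (use s2 in simp)
  have "((\<lambda>N. 1 / sqrt (real N) + (sqrt (real N) / 2) powr (2 - s) + 256 * (real N / 16) powr (2 - s))
      \<longlongrightarrow> 0 + 0 + 256 * 0) sequentially"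
    by (intro tendsto_add tendsto_mult lim_aux1 a b tendsto_const)
  then show ?thesis unfolding UB_def by simp
qed

lemma Fg_bound:
  assumes N64: "64 \<le> N"
  defines "L \<equiv> Lw N" and "R \<equiv> nat \<lfloor>sqrt (real N)\<rfloor>" and "q0 \<equiv> exp (- \<beta> * (Zc s * Zc s + 1))"
  shows "\<beta> * exp (\<beta> * (Zc s * Zc s + 1)) *
       (real N * real R + real N ^ 2 * real R powr (2 - s) + real N ^ 2 * (real N ^ 2 * real L powr (- s)))
       / (real L * q0 / 2) ^ 2
    \<le> \<beta> * exp (\<beta> * (Zc s * Zc s + 1)) * (32 / q0)^2 * UB N"
    and "1 \<le> R"
    and "real N ^ 2 * real L powr (- s) \<le> 256 * (real N / 16) powr (2 - s)"
proof -
  have Nr: "64 \<le> real N" using N64 by simp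
  have sq8: "8 \<le> sqrt (real N)" using real_sqrt_le_mono[OF Nr] by simp
  have R1: "real R \<le> sqrt (real N)" unfolding R_def by simp
  have R2: "sqrt (real N) / 2 \<le> real R"
  proof -
    have "sqrt (real N) - 1 \<le> real_of_int \<lfloor>sqrt (real N)\<rfloor>" by linarith
    moreover have "0 \<le> \<lfloor>sqrt (real N)\<rfloor>" by simp
    moreover have "real R = real_of_int \<lfloor>sqrt (real N)\<rfloor>" unfolding R_def by simp
    ultimately show ?thesis using sq8 by linarith
  qed
  show R1': "1 \<le> R" using R2 sq8 by linarith
  have L16: "real N / 16 \<le> real L"
  proof -
    have "N \<le> 16 * (N div 8)" using N64 by simp
    then show ?thesis unfolding L_def Lw_def by linarith
  qed
  have u0: "0 < real N / 16" using Nr by simp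
  have q0p: "0 < q0" unfolding q0_def by simp
  have Lpow: "real N ^ 2 * real L powr (- s) \<le> 256 * (real N / 16) powr (2 - s)"
  proof -
    have "real L powr (- s) \<le> (real N / 16) powr (- s)"
      by (rule powr_mono2') (use s2 L16 u0 in auto)
    then have A: "real N ^ 2 * real L powr (- s) \<le> real N ^ 2 * (real N / 16) powr (- s)"
      by (intro mult_left_mono) auto
    have B: "real N ^ 2 = 256 * (real N / 16) powr 2"
      using powr_realpow[OF u0, of 2] by (simp add: power2_eq_square)
    have C: "256 * (real N / 16) powr 2 * (real N / 16) powr (- s) = 256 * (real N / 16) powr (2 - s)"
      using powr_add[of "real N / 16" 2 "- s"] by simp
    have D: "real N ^ 2 * (real N / 16) powr (- s) = 256 * (real N / 16) powr (2 - s)"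
      by (subst B) (rule C)
    show ?thesis using A D by linarith
  qed
  then show "real N ^ 2 * real L powr (- s) \<le> 256 * (real N / 16) powr (2 - s)" .
  define A where "A = \<beta> * exp (\<beta> * (Zc s * Zc s + 1))"
  have A0: "0 \<le> A" unfolding A_def using \<beta>0 by simp
  have num: "real N * real R + real N ^ 2 * real R powr (2 - s) + real N ^ 2 * (real N ^ 2 * real L powr (- s))
      \<le> real N ^ 2 * UB N"
  proof -
    have t1: "real N * real R \<le> real N ^ 2 * (1 / sqrt (real N))"
    proof -
      have "real N * real R \<le> real N * sqrt (real N)" using R1 by (intro mult_left_mono) auto
      also have "\<dots> = real N * (real N / sqrt (real N))" by (simp add: real_div_sqrt)
      also have "\<dots> = real N ^ 2 * (1 / sqrt (real N))" by (simp add: power2_eq_square)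
      finally show ?thesis .
    qed
    have t2: "real R powr (2 - s) \<le> (sqrt (real N) / 2) powr (2 - s)"
      by (rule powr_mono2') (use s2 R2 sq8 N64 in auto)
    have "real N * real R + real N ^ 2 * real R powr (2 - s) + real N ^ 2 * (real N ^ 2 * real L powr (- s))
        \<le> real N ^ 2 * (1 / sqrt (real N)) + real N ^ 2 * (sqrt (real N) / 2) powr (2 - s)
          + real N ^ 2 * (256 * (real N / 16) powr (2 - s))"
      using t1 t2 Lpow by (intro add_mono mult_left_mono) auto
    also have "\<dots> = real N ^ 2 * UB N" unfolding UB_def by (simp add: algebra_simps)
    finally show ?thesis .
  qed
  have den: "(real N * q0 / 32) ^ 2 \<le> (real L * q0 / 2) ^ 2"
    using L16 q0p Nr by (intro power_mono) (auto simp: field_simps)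
  have den0: "0 < (real N * q0 / 32) ^ 2" using q0p Nr by simp
  have "A * (real N * real R + real N ^ 2 * real R powr (2 - s) + real N ^ 2 * (real N ^ 2 * real L powr (- s)))
       / (real L * q0 / 2) ^ 2
      \<le> A * (real N ^ 2 * UB N) / (real N * q0 / 32) ^ 2"
  proof (rule frac_le)
    have "0 \<le> UB N" unfolding UB_def by simp
    then show "0 \<le> A * (real N ^ 2 * UB N)" using A0 by simp
    show "A * (real N * real R + real N ^ 2 * real R powr (2 - s) + real N ^ 2 * (real N ^ 2 * real L powr (- s)))
        \<le> A * (real N ^ 2 * UB N)" using num A0 by (rule mult_left_mono)
  qed (use den den0 in auto)
  also have "\<dots> = A * (32 / q0)^2 * UB N" using Nr q0p by (simp add: field_simps power2_eq_square)
  finally show "\<beta> * exp (\<beta> * (Zc s * Zc s + 1)) *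
       (real N * real R + real N ^ 2 * real R powr (2 - s) + real N ^ 2 * (real N ^ 2 * real L powr (- s)))
       / (real L * q0 / 2) ^ 2
    \<le> \<beta> * exp (\<beta> * (Zc s * Zc s + 1)) * (32 / q0)^2 * UB N" unfolding A_def .
qed

end


theorem mainTheorem2:
  fixes s \<beta> :: real
  assumes "\<beta> > 0" and "s > 2"
  shows "\<exists>c>0. (\<lambda>N. graph_prob s \<beta> N {S. real (mixing_time N S) \<ge> c * real N ^ 2})
                  \<longlonglongrightarrow> 1"
proof -
  have \<beta>0: "0 < \<beta>" and s2: "2 < s" using assms by auto
  define Z where "Z = Zc s"
  define M where "M = Z * Z + 1"
  define q0 where "q0 = exp (- \<beta> * M)"
  define \<delta> where "\<delta> = q0 / 32"
  define K where "K = 2 * \<beta> * Z + 1"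
  define v0 where "v0 = 1 / (8 * (4 + 2 * K))"
  have Z0: "0 \<le> Z" unfolding Z_def by (rule Zc_nonneg[OF s2])
  have K1: "1 \<le> K" unfolding K_def using Z0 \<beta>0 by simp
  have v0pos: "0 < v0" unfolding v0_def using K1 by simp
  have v0le: "v0 \<le> 1 / 48" unfolding v0_def using K1 by (simp add: field_simps)
  have q0pos: "0 < q0" unfolding q0_def by simp
  have \<delta>pos: "0 < \<delta>" unfolding \<delta>_def using q0pos by simp
  obtain k where kk: "(1/4::real) ^ k < v0 / 2"
    using real_arch_pow_inv[of "v0 / 2" "1/4"] v0pos by auto
  have k1: "1 \<le> k"
  proof (rule ccontr)
    assume "\<not> 1 \<le> k"
    then have "k = 0" by simp
    then show False using kk v0le by simp
  qed
  define c where "c = v0 * \<delta> / (16 * real k)"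
  have cpos: "0 < c" unfolding c_def using v0pos \<delta>pos k1 by simp
  define A' where "A' = \<beta> * exp (\<beta> * M) * (32 / q0)^2"
  define U where "U = (\<lambda>N. 2 * A' * UB s N + 2 * \<beta> * Z / real N)"
  define gp where "gp = (\<lambda>N. graph_prob s \<beta> N {S. real (mixing_time N S) \<ge> c * real N ^ 2})"
  have Ulim: "(U \<longlongrightarrow> 0) sequentially"
  proof -
    have "((\<lambda>N. 2 * A' * UB s N + 2 * \<beta> * Z / real N) \<longlongrightarrow> 2 * A' * 0 + 0) sequentially"
      by (intro tendsto_add tendsto_mult tendsto_const UB_lim[OF s2 \<beta>0] lim_const_over_n)
    then show ?thesis unfolding U_def by simp
  qed
  have ev1: "\<forall>\<^sub>F N in sequentially. 64 \<le> N" by (rule eventually_ge_at_top)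
  have ev2: "\<forall>\<^sub>F N in sequentially. 256 * (real N / 16) powr (2 - s) \<le> 1"
  proof -
    have "((\<lambda>N::nat. (real N / 16) powr (2 - s)) \<longlongrightarrow> 0) sequentially"
      by (rule tendsto_neg_powr[OF _ lim_aux3]) (use s2 in simp)
    then have "\<forall>\<^sub>F N in sequentially. (real N / 16) powr (2 - s) < 1 / 256"
      by (rule order_tendstoD) simp
    then show ?thesis by eventually_elim simp
  qed
  have key: "1 - U N \<le> gp N" if N64: "64 \<le> N" and sm: "256 * (real N / 16) powr (2 - s) \<le> 1" for N
  proof -
    define V where "V = vpairs N"
    define p where "p = pp s \<beta> N"
    define L where "L = Lw N"
    define R where "R = nat \<lfloor>sqrt (real N)\<rfloor>"
    define W1 where "W1 = {L..<2 * L}"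
    define W2 where "W2 = {5 * L..<6 * L}"
    define A where "A = {S. real (mixing_time N S) \<ge> c * real N ^ 2}"
    have finV: "finite V" unfolding V_def by (rule finite_vpairs)
    have prange: "\<And>e. e \<in> V \<Longrightarrow> 0 \<le> p e \<and> p e \<le> 1" unfolding V_def p_def by (rule pp_range[OF s2 \<beta>0])
    have N16: "16 \<le> N" using N64 by simp
    have Nr: "0 < real N" using N64 by simp
    have L8: "8 * L \<le> N" unfolding L_def Lw_def by simp
    have L16: "real N / 16 \<le> real L"
    proof -
      have "N \<le> 16 * (N div 8)" using N64 by simp
      then show ?thesis unfolding L_def Lw_def by linarith
    qed
    have gpP: "gp N = Prg V p A" unfolding gp_def A_def V_def p_def
      by (simp add: graph_prob_Prg s2 \<beta>0)
    have FB: "\<beta> * exp (\<beta> * (Zc s * Zc s + 1)) *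
       (real N * real R + real N ^ 2 * real R powr (2 - s) + real N ^ 2 * (real N ^ 2 * real L powr (- s)))
       / (real L * exp (- \<beta> * (Zc s * Zc s + 1)) / 2) ^ 2
      \<le> \<beta> * exp (\<beta> * (Zc s * Zc s + 1)) * (32 / exp (- \<beta> * (Zc s * Zc s + 1)))^2 * UB s N"
      and R1: "1 \<le> R"
      and LP: "real N ^ 2 * real L powr (- s) \<le> 256 * (real N / 16) powr (2 - s)"
      unfolding L_def R_def by (rule Fg_bound[OF s2 \<beta>0 N64])+
    have small: "real N ^ 2 * real (Lw N) powr (- s) \<le> 1" using LP sm unfolding L_def by simp
    have dq: "\<delta> * real N \<le> real L * q0 / 2"
      unfolding \<delta>_def using L16 q0pos by (simp add: field_simps)
    have PG: "Prg V p {X. real (card {k \<in> W. good N X k}) < \<delta> * real N} \<le> A' * UB s N"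
      if W: "W \<subseteq> {..<N}" and cW: "card W = L" for W
    proof -
      have "Prg V p {X. real (card {k \<in> W. good N X k}) < \<delta> * real N}
          \<le> Prg V p {X. real (card {k \<in> W. good N X k}) < real (Lw N) * exp (- \<beta> * (Zc s * Zc s + 1)) / 2}"
        by (rule Prg_mono[OF prange]) (use dq in \<open>auto simp: L_def q0_def M_def Z_def\<close>)
      also have "\<dots> \<le> \<beta> * exp (\<beta> * (Zc s * Zc s + 1)) *
       (real N * real R + real N ^ 2 * real R powr (2 - s) + real N ^ 2 * (real N ^ 2 * real (Lw N) powr (- s)))
       / (real (Lw N) * exp (- \<beta> * (Zc s * Zc s + 1)) / 2) ^ 2"
        unfolding V_def p_def by (rule prob_few_good[OF s2 \<beta>0 N16 W cW[unfolded L_def] small R1])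
      also have "\<dots> \<le> A' * UB s N" using FB unfolding A'_def M_def q0_def Z_def L_def by simp
      finally show ?thesis .
    qed
    have W1s: "W1 \<subseteq> {..<N}" unfolding W1_def using L8 by auto
    have cW1: "card W1 = L" unfolding W1_def by simp
    have W2s: "W2 \<subseteq> {..<N}" unfolding W2_def using L8 by auto
    have cW2: "card W2 = L" unfolding W2_def by simp
    have G1e: "G1 N X = {k \<in> W1. good N X k}" for X unfolding G1_def W1_def L_def by simp
    have G2e: "G2 N X = {k \<in> W2. good N X k}" for X unfolding G2_def W2_def L_def by simp
    have P1: "Prg V p {X. real (card (G1 N X)) < \<delta> * real N} \<le> A' * UB s N"
      unfolding G1e by (rule PG[OF W1s cW1])
    have P2: "Prg V p {X. real (card (G2 N X)) < \<delta> * real N} \<le> A' * UB s N"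
      unfolding G2e by (rule PG[OF W2s cW2])
    have P3: "Prg V p {X. K * real N < real (card X)} \<le> 2 * \<beta> * Z / real N"
    proof -
      have "Prg V p {X. K * real N < real (card X)} \<le> Prg V p {X. (2 * \<beta> * Zc s + 1) * real N \<le> real (card X)}"
        by (rule Prg_mono[OF prange]) (auto simp: K_def Z_def)
      also have "\<dots> \<le> 2 * \<beta> * Zc s / real N"
        unfolding V_def p_def by (rule prob_many_edges[OF s2 \<beta>0]) (use N64 in simp)
      finally show ?thesis unfolding Z_def .
    qed
    define Gd where "Gd = {X. \<delta> * real N \<le> real (card (G1 N X)) \<and> \<delta> * real N \<le> real (card (G2 N X))
        \<and> real (card X) \<le> K * real N}"
    have GdA: "Prg V p Gd \<le> Prg V p A"
    proof (rule Prg_mono[OF prange])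
      fix X assume XV: "X \<subseteq> V" and XG: "X \<in> Gd"
      have g1: "\<delta> * real N \<le> real (card (G1 N X))" and g2: "\<delta> * real N \<le> real (card (G2 N X))"
        and sk: "real (card X) \<le> K * real N" using XG unfolding Gd_def by auto
      have dN: "0 < \<delta> * real N" using \<delta>pos Nr by simp
      interpret gs: gsetup N X
        by unfold_locales (use N16 XV g1 g2 dN in \<open>auto simp: V_def\<close>)
      have kv: "(1/4) ^ k \<le> (1 / (8 * (4 + 2 * K))) / 2" using kk unfolding v0_def by simp
      have "(1 / (8 * (4 + 2 * K))) * \<delta> / (16 * real k) * real N ^ 2 \<le> real (mixing_time N X)"
        by (rule gs.det_bound[OF \<delta>pos _ k1 kv g1 g2 sk]) (use K1 in simp)
      then show "X \<in> A" unfolding A_def c_def v0_def by simp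
    qed
    define E1 where "E1 = {X. real (card (G1 N X)) < \<delta> * real N}"
    define E2 where "E2 = {X. real (card (G2 N X)) < \<delta> * real N}"
    define E3 :: "(nat \<times> nat) set set" where "E3 = {X. K * real N < real (card X)}"
    have hsub: "- Gd \<subseteq> E1 \<union> E2 \<union> E3"
    proof
      fix X assume "X \<in> - Gd"
      then have "\<not> (\<delta> * real N \<le> real (card (G1 N X)) \<and> \<delta> * real N \<le> real (card (G2 N X))
        \<and> real (card X) \<le> K * real N)" unfolding Gd_def by simp
      then show "X \<in> E1 \<union> E2 \<union> E3" unfolding E1_def E2_def E3_def by (simp add: not_le)
    qed
    have c1: "Prg V p (- Gd) \<le> Prg V p (E1 \<union> E2 \<union> E3)"
    proof (rule Prg_mono[OF prange])
      fix X assume "X \<in> - Gd"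
      then show "X \<in> E1 \<union> E2 \<union> E3" using hsub by blast
    qed
    have c2: "Prg V p (E1 \<union> E2 \<union> E3) \<le> Prg V p (E1 \<union> E2) + Prg V p E3"
      by (rule Prg_union[OF prange])
    have c3: "Prg V p (E1 \<union> E2) \<le> Prg V p E1 + Prg V p E2"
      by (rule Prg_union[OF prange])
    have c4: "Prg V p Gd = 1 - Prg V p (- Gd)" by (rule Prg_compl[OF finV])
    have P1': "Prg V p E1 \<le> A' * UB s N" unfolding E1_def by (rule P1)
    have P2': "Prg V p E2 \<le> A' * UB s N" unfolding E2_def by (rule P2)
    have P3': "Prg V p E3 \<le> 2 * \<beta> * Z / real N" unfolding E3_def by (rule P3)
    have "1 - (A' * UB s N + A' * UB s N + 2 * \<beta> * Z / real N) \<le> Prg V p A"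
      using c1 c2 c3 c4 P1' P2' P3' GdA by linarith
    moreover have "U N = A' * UB s N + A' * UB s N + 2 * \<beta> * Z / real N" unfolding U_def by simp
    ultimately show ?thesis using gpP by simp
  qed
  have low: "\<forall>\<^sub>F N in sequentially. 1 - U N \<le> gp N"
    using ev1 ev2 by eventually_elim (rule key)
  have up: "\<forall>\<^sub>F N in sequentially. gp N \<le> 1"
  proof (rule always_eventually, rule allI)
    fix N
    have "gp N = Prg (vpairs N) (pp s \<beta> N) {S. real (mixing_time N S) \<ge> c * real N ^ 2}"
      unfolding gp_def by (simp add: graph_prob_Prg s2 \<beta>0)
    also have "\<dots> \<le> 1" by (rule Prg_le1[OF finite_vpairs pp_range[OF s2 \<beta>0]])
    finally show "gp N \<le> 1" .
  qed
  have "((\<lambda>N. 1 - U N) \<longlongrightarrow> 1 - 0) sequentially" by (intro tendsto_diff tendsto_const Ulim)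
  then have "((\<lambda>N. 1 - U N) \<longlongrightarrow> 1) sequentially" by simp
  then have "(gp \<longlongrightarrow> 1) sequentially"
    by (rule tendsto_sandwich[OF low up _ tendsto_const])
  then show ?thesis using cpos unfolding gp_def by blast
qed


end
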